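(* Fix a prime power $q\ge3$ and let $\gamma\in[0,q-1)$ and $\kappa\in[0,\frac{q-1}{q})$. Then for a small $\epsilon\in(0,1)$ and all sufficiently large $n$, with probability at least $1-q^{-n}$, a random $\mathbb{F}_q$-linear insdel code $\mathcal{C}\subseteq\mathbb{F}_q^n$ of rate $$R=1-(2\gamma-\kappa+1)H_q\!\left(\frac{\gamma}{2\gamma-\kappa+1}\right)+\gamma\log_q(q-1)-H_q(\kappa)-\epsilon$$ is list decodable against $\gamma n$ insertions and $\kappa n$ deletions with list size $\exp(O(1/\epsilon))$.
   Context: The alphabet is the finite field $\mathbb{F}_q$. A code $\mathcal{C}\subseteq\mathbb{F}_q^n$ is list decodable against $\gamma n$ insertions and $\kappa n$ deletions with list size $L$ if for every word $\mathbf r$ there are at most $L$ codewords $\mathbf c\in\mathcal{C}$ such that $\mathbf r$ can be obtained from $\mathbf c$ by at most $\gamma n$ insertions and at most $\kappa n$ deletions. A random $\mathbb{F}_q$-linear code of rate $R$ is the $\mathbb{F}_q$-span of $Rn$ linearly independent vectors chosen uniformly at random from $\mathbb{F}_q^n$. $H_q(x)=x\log_q(q-1)-x\log_qx-(1-x)\log_q(1-x)$ for $0<x<1$, $H_q(0)=H_q(1)=0$. *)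

theory Defs
  imports Complex_Main
begin

definition Hq :: "real \<Rightarrow> real \<Rightarrow> real" where
  "Hq q x = (if x = 0 \<or> x = 1 then 0
             else x * log q (q - 1) - x * log q x - (1 - x) * log q (1 - x))"

inductive obtainable :: "'a list \<Rightarrow> nat \<Rightarrow> nat \<Rightarrow> 'a list \<Rightarrow> bool" where
  refl: "obtainable x 0 0 x"
| ins: "obtainable x i d (u @ w) \<Longrightarrow> obtainable x (Suc i) d (u @ a # w)"
| del: "obtainable x i d (u @ a # w) \<Longrightarrow> obtainable x i (Suc d) (u @ w)"

definition list_decodable_insdel :: "'a list set \<Rightarrow> real \<Rightarrow> real \<Rightarrow> real \<Rightarrow> bool" where
  "list_decodable_insdel C ins dels L \<longleftrightarrow>
     (\<forall>r. real (card {c \<in> C. \<exists>i d. real i \<le> ins \<and> real d \<le> dels \<and> obtainable c i d r}) \<le> L)"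

definition lin_indep_vecs :: "nat \<Rightarrow> ('a::field) list list \<Rightarrow> bool" where
  "lin_indep_vecs n vs \<longleftrightarrow>
     (\<forall>c::nat \<Rightarrow> 'a. (\<forall>j<n. (\<Sum>i<length vs. c i * vs ! i ! j) = 0) \<longrightarrow> (\<forall>i<length vs. c i = 0))"

definition span_vecs :: "nat \<Rightarrow> ('a::field) list list \<Rightarrow> 'a list set" where
  "span_vecs n vs = {map (\<lambda>j. \<Sum>i<length vs. c i * vs ! i ! j) [0..<n] | c. True}"

text \<open>The sample space of a random linear code of dimension k in F_q^n:
  k-tuples of linearly independent vectors of F_q^n (chosen uniformly).\<close>
definition indep_tuples :: "nat \<Rightarrow> nat \<Rightarrow> ('a::field) list list set" where
  "indep_tuples n k = {vs. length vs = k \<and> (\<forall>v\<in>set vs. length v = n) \<and> lin_indep_vecs n vs}"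

definition prob_random_linear_code :: "nat \<Rightarrow> nat \<Rightarrow> ('a::{field,finite} list set \<Rightarrow> bool) \<Rightarrow> real" where
  "prob_random_linear_code n k P =
     real (card {vs \<in> (indep_tuples n k :: 'a list list set). P (span_vecs n vs)})
     / real (card (indep_tuples n k :: 'a list list set))"

end

theory Submission
  imports Defs "HOL-Library.Sublist" "HOL-Library.FuncSet"
begin
lemma subseq_del_one:
  "subseq s (u @ a # w) \<Longrightarrow> \<exists>s'. subseq s' s \<and> subseq s' (u @ w) \<and> length s \<le> Suc (length s')"
proof (induction u arbitrary: s)
  case Nil
  show ?case
  proof (cases s)
    case Nil then show ?thesis by auto
  next
    case (Cons x s0)
    show ?thesis
    proof (cases "subseq s w")
      case True then show ?thesis by auto
    next
      case False
      with Nil.prems Cons have "x = a" "subseq s0 w"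
        by (auto split: if_splits)
      then show ?thesis using Cons by (intro exI[of _ s0]) auto
    qed
  qed
next
  case (Cons b u')
  show ?case
  proof (cases s)
    case Nil then show ?thesis by auto
  next
    case (Cons x s0)
    show ?thesis
    proof (cases "x = b")
      case True
      with Cons.prems \<open>s = x # s0\<close> have "subseq s0 (u' @ a # w)" by simp
      from Cons.IH[OF this] obtain s0' where "subseq s0' s0" "subseq s0' (u' @ w)" "length s0 \<le> Suc (length s0')" by blast
      then show ?thesis using \<open>s = x # s0\<close> True by (intro exI[of _ "b # s0'"]) auto
    next
      case False
      with Cons.prems \<open>s = x # s0\<close> have "subseq s (u' @ a # w)" by simp
      from Cons.IH[OF this] obtain s' where "subseq s' s" "subseq s' (u' @ w)" "length s \<le> Suc (length s')" by blast
      then show ?thesis by (intro exI[of _ s']) auto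
    qed
  qed
qed

lemma obtainable_common:
  "obtainable c i d r \<Longrightarrow> \<exists>s. subseq s c \<and> subseq s r \<and> length c \<le> length s + d \<and> length r \<le> length s + i"
proof (induction rule: obtainable.induct)
  case (refl x)
  then show ?case by (intro exI[of _ x]) auto
next
  case (ins x i d u w a)
  then obtain s where s: "subseq s x" "subseq s (u @ w)" "length x \<le> length s + d" "length (u @ w) \<le> length s + i" by blast
  have "subseq w (a # w)" by (rule list_emb_Cons) simp
  then have "subseq (u @ w) (u @ a # w)" by (simp add: subseq_append')
  with s(2) have "subseq s (u @ a # w)" using subseq_order.order_trans by blast
  with s show ?case by (intro exI[of _ s]) auto
next
  case (del x i d u a w)
  then obtain s where s: "subseq s x" "subseq s (u @ a # w)" "length x \<le> length s + d" "length (u @ a # w) \<le> length s + i" by blast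
  from subseq_del_one[OF s(2)] obtain s' where s': "subseq s' s" "subseq s' (u @ w)" "length s \<le> Suc (length s')" by blast
  have "subseq s' x" using s'(1) s(1) subseq_order.order_trans by blast
  with s s' show ?case by (intro exI[of _ s']) auto
qed

definition sub_set :: "'a list \<Rightarrow> nat \<Rightarrow> 'a list set" where
  "sub_set r l = {s. subseq s r \<and> length s = l}"

definition sup_set :: "'a list \<Rightarrow> nat \<Rightarrow> 'a list set" where
  "sup_set s n = {c. length c = n \<and> subseq s c}"

lemma finite_sub_set: "finite (sub_set r l)"
proof -
  have "sub_set r l \<subseteq> set (subseqs r)"
    unfolding sub_set_def by auto
  then show ?thesis by (rule finite_subset) simp
qed

lemma finite_sup_set: "finite (sup_set (s::'a::finite list) n)"
proof -
  have "sup_set s n \<subseteq> {s. set s \<subseteq> UNIV \<and> length s = n}"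
    unfolding sup_set_def by auto
  moreover have "finite {s::'a list. set s \<subseteq> UNIV \<and> length s = n}"
    by (rule finite_lists_length_eq) simp
  ultimately show ?thesis by (rule finite_subset)
qed

lemma sub_set_Cons_Suc:
  "sub_set (x # r) (Suc l) \<subseteq> Cons x ` sub_set r l \<union> sub_set r (Suc l)"
proof
  fix s assume "s \<in> sub_set (x # r) (Suc l)"
  then obtain y s0 where s: "s = y # s0" "subseq (y # s0) (x # r)" "length s0 = l"
    unfolding sub_set_def by (cases s) auto
  show "s \<in> Cons x ` sub_set r l \<union> sub_set r (Suc l)"
  proof (cases "y = x")
    case True
    with s have "subseq s0 r" by simp
    with s True show ?thesis unfolding sub_set_def by auto
  next
    case False
    with s have "subseq s r" by simp
    with s show ?thesis unfolding sub_set_def by auto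
  qed
qed

lemma sub_set_too_long: "length r < l \<Longrightarrow> sub_set r l = {}"
  by (auto simp: sub_set_def dest: list_emb_length)

lemma sub_set_0: "sub_set r 0 = {[]}"
  unfolding sub_set_def by auto

lemma sub_set_bound:
  fixes p :: real
  assumes p: "0 < p" "p < 1"
  shows "l \<le> length r \<Longrightarrow> real (card (sub_set r l)) \<le> (1/p) ^ (length r - l) * (1/(1-p)) ^ l"
proof (induction r arbitrary: l)
  case Nil
  then have "l = 0" by simp
  then show ?case by (simp add: sub_set_0)
next
  case (Cons x r)
  have a1: "1 \<le> 1/p" using p by simp
  have b1: "1 \<le> 1/(1-p)" using p by simp
  show ?case
  proof (cases l)
    case 0
    have "1 \<le> (1/p) ^ (length (x # r) - l)" by (rule one_le_power[OF a1])
    then show ?thesis using 0 by (simp add: sub_set_0)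
  next
    case (Suc l')
    have "card (sub_set (x # r) l) \<le> card (Cons x ` sub_set r l' \<union> sub_set r (Suc l'))"
      using Suc sub_set_Cons_Suc[of x r l'] by (intro card_mono) (auto simp: finite_sub_set)
    also have "\<dots> \<le> card (Cons x ` sub_set r l') + card (sub_set r (Suc l'))"
      by (rule card_Un_le)
    also have "\<dots> \<le> card (sub_set r l') + card (sub_set r (Suc l'))"
      using card_image_le[OF finite_sub_set] by simp
    finally have c: "real (card (sub_set (x # r) l)) \<le> real (card (sub_set r l')) + real (card (sub_set r (Suc l')))"
      by linarith
    have ih1: "real (card (sub_set r l')) \<le> (1/p) ^ (length r - l') * (1/(1-p)) ^ l'"
      using Cons.IH Cons.prems Suc by simp
    show ?thesis
    proof (cases "Suc l' \<le> length r")
      case True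
      have ih2: "real (card (sub_set r (Suc l'))) \<le> (1/p) ^ (length r - Suc l') * (1/(1-p)) ^ Suc l'"
        using Cons.IH True by blast
      obtain k where k: "length r - l' = Suc k" "length r - Suc l' = k" using True
        by (metis Suc_diff_Suc Suc_le_lessD)
      have e: "(1/p) * (1/(1-p)) = 1/p + 1/(1-p)" using p by (simp add: field_simps)
      have "(1/p) ^ (length r - l') * (1/(1-p)) ^ l' + (1/p) ^ (length r - Suc l') * (1/(1-p)) ^ Suc l'
          = (1/p)^k * (1/(1-p))^l' * (1/p + 1/(1-p))" unfolding k by (simp add: algebra_simps)
      also have "\<dots> = (1/p)^k * (1/(1-p))^l' * ((1/p) * (1/(1-p)))" by (simp only: e)
      also have "\<dots> = (1/p) ^ (length (x # r) - l) * (1/(1-p)) ^ l"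
        using Suc k by (simp add: algebra_simps)
      finally show ?thesis using c ih1 ih2 by linarith
    next
      case False
      then have "sub_set r (Suc l') = {}" by (intro sub_set_too_long) simp
      then have "real (card (sub_set (x # r) l)) \<le> (1/p) ^ (length r - l') * (1/(1-p)) ^ l'"
        using c ih1 by simp
      also have "\<dots> \<le> (1/p) ^ (length (x # r) - l) * (1/(1-p)) ^ l"
      proof -
        have lr: "l' = length r" using False Cons.prems Suc by simp
        have "(1/(1-p))^l' * 1 \<le> (1/(1-p))^l' * (1/(1-p))" by (rule mult_left_mono[OF b1]) (use p in simp)
        then show ?thesis using lr Suc by simp
      qed
      finally show ?thesis .
    qed
  qed
qed

lemma sub_set_full: "card (sub_set r (length r)) \<le> 1"
proof -
  have "sub_set r (length r) \<subseteq> {r}"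
    by (auto simp: sub_set_def dest: subseq_same_length)
  then show ?thesis using card_mono[of "{r}"] by fastforce
qed

lemma sup_set_Cons_Suc:
  "sup_set (a # s) (Suc n) \<subseteq> Cons a ` sup_set s n \<union> (\<lambda>(x, c). x # c) ` ((UNIV - {a}) \<times> sup_set (a # s) n)"
proof
  fix c assume "c \<in> sup_set (a # s) (Suc n)"
  then obtain x c0 where c: "c = x # c0" "subseq (a # s) (x # c0)" "length c0 = n"
    unfolding sup_set_def by (cases c) auto
  show "c \<in> Cons a ` sup_set s n \<union> (\<lambda>(x, c). x # c) ` ((UNIV - {a}) \<times> sup_set (a # s) n)"
  proof (cases "x = a")
    case True
    with c have "subseq s c0" by simp
    with c True show ?thesis unfolding sup_set_def by auto
  next
    case False
    with c have "subseq (a # s) c0" by simp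
    with c False show ?thesis unfolding sup_set_def by auto
  qed
qed

lemma sup_set_too_short: "n < length s \<Longrightarrow> sup_set s n = {}"
  by (auto simp: sup_set_def dest: list_emb_length)

lemma sup_set_Nil: "sup_set [] n = {c. set c \<subseteq> UNIV \<and> length c = n}"
  by (auto simp: sup_set_def)

lemma pw1: "(x::real)^k * y^l * (x*y) = x^(Suc k) * y^(Suc l)"
  by (simp add: mult_ac)

lemma pw2: "(x::real)^(Suc k) * y^l + c * (x^k * y^(Suc l)) = x^k * y^l * (x + c * y)"
  by (simp add: algebra_simps)

lemma sup_set_bound:
  fixes p :: real
  assumes p: "0 < p" "p \<le> (real (card (UNIV::'a set)) - 1) / real (card (UNIV::'a set))"
  shows "length (s::'a::finite list) \<le> n \<Longrightarrow>
    real (card (sup_set s n)) \<le> ((real (card (UNIV::'a set)) - 1)/p) ^ (n - length s) * (1/(1-p)) ^ length s"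
proof (induction n arbitrary: s)
  case 0
  then have "s = []" by simp
  have "sup_set ([]::'a list) 0 = {[]}" by (auto simp: sup_set_def)
  then show ?case using \<open>s = []\<close> by simp
next
  case (Suc n)
  define q where "q = real (card (UNIV::'a set))"
  have q1: "q \<ge> 1" unfolding q_def using finite_UNIV_card_ge_0[where 'a='a] by simp
  have "(q-1)/q < 1" using q1 by simp
  then have p1: "p < 1" using p unfolding q_def[symmetric] by linarith
  have Aq: "q \<le> (q - 1)/p"
  proof -
    have "p * q \<le> q - 1" using p q1 unfolding q_def[symmetric] by (simp add: le_divide_eq)
    then show ?thesis using p by (simp add: le_divide_eq mult.commute)
  qed
  have b1: "1 \<le> 1/(1-p)" using p p1 by simp
  have A0: "0 \<le> (q-1)/p" using q1 p by simp
  show ?case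
  proof (cases s)
    case Nil
    have "real (card (sup_set s (Suc n))) = q ^ Suc n"
    proof -
      have "card {c::'a list. set c \<subseteq> UNIV \<and> length c = Suc n} = card (UNIV::'a set) ^ Suc n"
        by (rule card_lists_length_eq) simp
      then show ?thesis unfolding Nil sup_set_Nil q_def by simp
    qed
    also have "\<dots> \<le> ((q - 1)/p) ^ Suc n" using Aq q1 by (intro power_mono) auto
    finally show ?thesis using Nil unfolding q_def by simp
  next
    case (Cons a s')
    have fin: "finite ((UNIV - {a}) \<times> sup_set (a # s') n)" using finite_sup_set[of "a # s'" n] by (intro finite_cartesian_product) auto
    have "card (sup_set s (Suc n)) \<le> card (Cons a ` sup_set s' n \<union> (\<lambda>(x, c). x # c) ` ((UNIV - {a}) \<times> sup_set (a # s') n))"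
      unfolding Cons by (intro card_mono sup_set_Cons_Suc) (use fin finite_sup_set in auto)
    also have "\<dots> \<le> card (Cons a ` sup_set s' n) + card ((\<lambda>(x, c). x # c) ` ((UNIV - {a}) \<times> sup_set (a # s') n))"
      by (rule card_Un_le)
    also have "\<dots> \<le> card (sup_set s' n) + card ((UNIV - {a}) \<times> sup_set (a # s') n)"
      by (intro add_mono card_image_le finite_sup_set fin)
    also have "\<dots> = card (sup_set s' n) + (card (UNIV::'a set) - 1) * card (sup_set (a # s') n)"
      by (simp add: card_cartesian_product card_Diff_subset)
    finally have cn: "card (sup_set s (Suc n)) \<le> card (sup_set s' n) + (card (UNIV::'a set) - 1) * card (sup_set (a # s') n)" .
    have qq: "real (card (UNIV::'a set) - 1) = q - 1"
      using finite_UNIV_card_ge_0[where 'a='a] unfolding q_def by (simp add: of_nat_diff)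
    have c: "real (card (sup_set s (Suc n))) \<le> real (card (sup_set s' n)) + (q - 1) * real (card (sup_set (a # s') n))"
      using of_nat_mono[OF cn, where 'a=real] unfolding of_nat_add of_nat_mult qq .
    have ih1: "real (card (sup_set s' n)) \<le> ((q-1)/p) ^ (n - length s') * (1/(1-p)) ^ length s'"
      using Suc.IH Suc.prems Cons unfolding q_def by simp
    show ?thesis
    proof (cases "Suc (length s') \<le> n")
      case True
      have ih2: "real (card (sup_set (a # s') n)) \<le> ((q-1)/p) ^ (n - Suc (length s')) * (1/(1-p)) ^ Suc (length s')"
        using Suc.IH[of "a # s'"] True unfolding q_def by simp
      obtain k where k: "n - length s' = Suc k" "n - Suc (length s') = k" using True
        by (metis Suc_diff_Suc Suc_le_lessD)
      have e: "(q-1)/p + (q-1) * (1/(1-p)) = ((q-1)/p) * (1/(1-p))" using p p1 by (simp add: field_simps)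
      have "real (card (sup_set s (Suc n))) \<le> ((q-1)/p) ^ (n - length s') * (1/(1-p)) ^ length s'
           + (q-1) * (((q-1)/p) ^ (n - Suc (length s')) * (1/(1-p)) ^ Suc (length s'))"
        using c ih1 ih2 q1 by (smt (verit) mult_left_mono)
      also have "\<dots> = ((q-1)/p)^k * (1/(1-p))^length s' * ((q-1)/p + (q-1) * (1/(1-p)))"
        unfolding k by (rule pw2)
      also have "\<dots> = ((q-1)/p)^k * (1/(1-p))^length s' * (((q-1)/p) * (1/(1-p)))" by (simp only: e)
      also have "\<dots> = ((q-1)/p) ^ (Suc n - length s) * (1/(1-p)) ^ length s"
      proof -
        have "Suc n - length s = Suc k" using Cons k by simp
        then show ?thesis using Cons pw1 by simp
      qed
      finally show ?thesis unfolding q_def .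
    next
      case False
      then have "sup_set (a # s') n = {}" by (intro sup_set_too_short) simp
      then have "real (card (sup_set s (Suc n))) \<le> ((q-1)/p) ^ (n - length s') * (1/(1-p)) ^ length s'"
        using c ih1 by simp
      also have "\<dots> \<le> ((q-1)/p) ^ (Suc n - length s) * (1/(1-p)) ^ length s"
      proof -
        have lr: "length s' = n" using False Suc.prems Cons by simp
        have "(1/(1-p))^n * 1 \<le> (1/(1-p))^n * (1/(1-p))" by (rule mult_left_mono[OF b1]) (use p1 in simp)
        then show ?thesis using lr Cons by simp
      qed
      finally show ?thesis unfolding q_def .
    qed
  qed
qed

lemma sup_set_full: "card (sup_set s (length s)) \<le> 1"
proof -
  have "sup_set s (length s) \<subseteq> {s}"
    by (auto simp: sup_set_def dest: subseq_same_length)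
  then show ?thesis using card_mono[of "{s}"] by fastforce
qed

definition Msg :: "nat \<Rightarrow> (nat \<Rightarrow> 'a) set" where
  "Msg k = PiE {..<k} (\<lambda>_. UNIV)"

definition structured :: "nat \<Rightarrow> (nat \<Rightarrow> 'a) \<Rightarrow> (nat \<Rightarrow> 'a) list \<Rightarrow> nat list \<Rightarrow> bool" where
  "structured k m0 ms ps \<longleftrightarrow> length ms = length ps \<and> distinct ps \<and> set ps \<subseteq> {..<k}
     \<and> (\<forall>l<length ps. (ms ! l) (ps ! l) \<noteq> m0 (ps ! l))
     \<and> (\<forall>j l. j < l \<longrightarrow> l < length ps \<longrightarrow> (ms ! j) (ps ! l) = m0 (ps ! l))"

lemma Msg_diff: "m \<in> Msg k \<Longrightarrow> m' \<in> Msg k \<Longrightarrow> m \<noteq> m' \<Longrightarrow> \<exists>i<k. m i \<noteq> m' i"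
  unfolding Msg_def using PiE_ext by (metis lessThan_iff)

lemma extraction:
  fixes S :: "(nat \<Rightarrow> 'a::finite) set"
  assumes "S \<subseteq> Msg k" "card (UNIV::'a set) ^ t \<le> card S" and q2: "card (UNIV::'a set) \<ge> 2"
  shows "\<exists>m0 ms ps. m0 \<in> S \<and> set ms \<subseteq> S \<and> length ps = t \<and> structured k m0 ms ps"
  using assms
proof (induction t arbitrary: S)
  case 0
  then have "S \<noteq> {}" by auto
  then obtain m0 where "m0 \<in> S" by blast
  then show ?case by (intro exI[of _ m0] exI[of _ "[]"]) (auto simp: structured_def)
next
  case (Suc t)
  define q where "q = card (UNIV::'a set)"
  have q1: "q \<ge> 1" unfolding q_def using finite_UNIV_card_ge_0[where 'a='a] by simp
  have finS: "finite S"
  proof -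
    have "finite (Msg k :: (nat \<Rightarrow> 'a) set)" unfolding Msg_def by (intro finite_PiE) auto
    then show ?thesis using Suc.prems(1) finite_subset by blast
  qed
  have "card S \<ge> 2"
  proof -
    have "q ^ Suc t \<ge> q" using q1 by (simp add: self_le_power)
    moreover have "q \<ge> 2"
      using q2 unfolding q_def .
    ultimately have "2 \<le> q ^ Suc t" by linarith
    then show ?thesis using Suc.prems(2) unfolding q_def by linarith
  qed
  then obtain u v where uv: "u \<in> S" "v \<in> S" "u \<noteq> v"
  proof -
    have "\<not> card S \<le> Suc 0" using \<open>card S \<ge> 2\<close> by simp
    then show ?thesis using card_le_Suc0_iff_eq[OF finS] that by blast
  qed
  then obtain P0 where P0: "P0 < k" "u P0 \<noteq> v P0" using Msg_diff Suc.prems(1) by blast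
  define Sa where "Sa a = {x \<in> S. x P0 = a}" for a
  have "\<exists>a. q ^ t \<le> card (Sa a)"
  proof (rule ccontr)
    assume "\<not> ?thesis"
    then have lt0: "card (Sa a) < q ^ t" for a by (simp add: not_le)
    have lt: "card (Sa a) \<le> q ^ t - 1" for a using lt0[of a] by linarith
    have "S \<subseteq> (\<Union>a. Sa a)" unfolding Sa_def by auto
    then have "card S \<le> card (\<Union>a. Sa a)" by (intro card_mono) (auto simp: Sa_def finS)
    also have "\<dots> \<le> (\<Sum>a\<in>UNIV. card (Sa a))" by (rule card_UN_le) simp
    also have "\<dots> \<le> (\<Sum>a\<in>(UNIV::'a set). q ^ t - 1)" by (intro sum_mono lt)
    also have "\<dots> = q * (q ^ t - 1)" unfolding q_def by simp
    also have "\<dots> < q ^ Suc t" using q1 by (simp add: diff_mult_distrib2)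
    finally show False using Suc.prems(2) unfolding q_def by linarith
  qed
  then obtain a where a: "q ^ t \<le> card (Sa a)" by blast
  obtain w where w: "w \<in> S" "w P0 \<noteq> a" using uv P0 by metis
  have "Sa a \<subseteq> Msg k" using Suc.prems(1) unfolding Sa_def by auto
  from Suc.IH[OF this] a q2 obtain m0 ms ps where
    IH: "m0 \<in> Sa a" "set ms \<subseteq> Sa a" "length ps = t" "structured k m0 ms ps" unfolding q_def by blast
  have lms: "length ms = t" using IH unfolding structured_def by simp
  have m0a: "m0 P0 = a" using IH(1) unfolding Sa_def by simp
  have msa: "\<And>j. j < t \<Longrightarrow> (ms ! j) P0 = a" using IH(2) lms unfolding Sa_def by (auto dest: nth_mem)
  have notin: "P0 \<notin> set ps"
  proof
    assume "P0 \<in> set ps"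
    then obtain l where l: "l < t" "ps ! l = P0" using IH(3) by (metis in_set_conv_nth)
    then have "(ms ! l) (ps ! l) \<noteq> m0 (ps ! l)" using IH(3,4) unfolding structured_def by blast
    with l msa m0a show False by simp
  qed
  show ?case
  proof (intro exI[of _ m0] exI[of _ "ms @ [w]"] exI[of _ "ps @ [P0]"] conjI)
    show "m0 \<in> S" using IH(1) unfolding Sa_def by simp
    show "set (ms @ [w]) \<subseteq> S" using IH(2) w unfolding Sa_def by auto
    show "length (ps @ [P0]) = Suc t" using IH(3) by simp
    show "structured k m0 (ms @ [w]) (ps @ [P0])"
      unfolding structured_def
    proof (intro conjI allI impI)
      show "length (ms @ [w]) = length (ps @ [P0])" using lms IH(3) by simp
      show "distinct (ps @ [P0])" using IH(4) notin unfolding structured_def by simp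
      show "set (ps @ [P0]) \<subseteq> {..<k}" using IH(4) P0 unfolding structured_def by simp
    next
      fix l assume l: "l < length (ps @ [P0])"
      show "((ms @ [w]) ! l) ((ps @ [P0]) ! l) \<noteq> m0 ((ps @ [P0]) ! l)"
      proof (cases "l < t")
        case True
        then show ?thesis using IH(3,4) lms unfolding structured_def by (simp add: nth_append)
      next
        case False
        then have "l = t" using l IH(3) by simp
        then show ?thesis using lms IH(3) w m0a by (simp add: nth_append)
      qed
    next
      fix j l assume jl: "j < l" "l < length (ps @ [P0])"
      show "((ms @ [w]) ! j) ((ps @ [P0]) ! l) = m0 ((ps @ [P0]) ! l)"
      proof (cases "l < t")
        case True
        then show ?thesis using IH(3,4) lms jl unfolding structured_def by (simp add: nth_append)
      next
        case False
        then have "l = t" using jl IH(3) by simp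
        then show ?thesis using lms IH(3) jl msa m0a by (simp add: nth_append)
      qed
    qed
  qed
qed

definition enc :: "nat \<Rightarrow> ('a::field) list list \<Rightarrow> (nat \<Rightarrow> 'a) \<Rightarrow> 'a list" where
  "enc n vs m = map (\<lambda>j. \<Sum>i<length vs. m i * vs ! i ! j) [0..<n]"

definition Tup :: "nat \<Rightarrow> nat \<Rightarrow> 'a list list set" where
  "Tup n k = {vs. set vs \<subseteq> {v. length v = n} \<and> length vs = k}"

lemma enc_nth: "a < n \<Longrightarrow> enc n vs m ! a = (\<Sum>i<length vs. m i * vs ! i ! a)"
  unfolding enc_def by simp

lemma length_enc [simp]: "length (enc n vs m) = n"
  unfolding enc_def by simp

lemma card_lists_n: "card {v::'a::finite list. length v = n} = card (UNIV::'a set) ^ n"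
proof -
  have "card {v::'a list. set v \<subseteq> UNIV \<and> length v = n} = card (UNIV::'a set) ^ n"
    by (rule card_lists_length_eq) simp
  then show ?thesis by simp
qed

lemma finite_lists_n: "finite {v::'a::finite list. length v = n}"
proof -
  have "finite {v::'a list. set v \<subseteq> UNIV \<and> length v = n}"
    by (rule finite_lists_length_eq) simp
  then show ?thesis by simp
qed

lemma card_Tup: "card (Tup n k :: 'a::finite list list set) = (card (UNIV::'a set) ^ n) ^ k"
  unfolding Tup_def by (subst card_lists_length_eq) (auto simp: finite_lists_n card_lists_n)

lemma finite_Tup: "finite (Tup n k :: 'a::finite list list set)"
  unfolding Tup_def by (rule finite_lists_length_eq) (simp add: finite_lists_n)

lemma pivot_eq:
  fixes vs vs' :: "'a::field list list"
  assumes vs: "vs \<in> Tup n k" and vs': "vs' \<in> Tup n k"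
    and st: "structured k m0 ms ps"
    and e0: "enc n vs m0 = enc n vs' m0"
    and es: "map (enc n vs) ms = map (enc n vs') ms"
    and np: "\<And>i. i < k \<Longrightarrow> i \<notin> set ps \<Longrightarrow> vs ! i = vs' ! i"
  shows "l < length ps \<Longrightarrow> vs ! (ps ! l) = vs' ! (ps ! l)"
proof (induction l rule: less_induct)
  case (less l)
  have lens: "length vs = k" "length vs' = k" using vs vs' unfolding Tup_def by auto
  have pk: "ps ! l < k" using st less.prems unfolding structured_def by (auto dest: nth_mem)
  have lms: "length ms = length ps" using st unfolding structured_def by simp
  have len1: "length (vs ! (ps ! l)) = n" using vs pk lens unfolding Tup_def by (auto dest: nth_mem)
  have "vs' ! (ps ! l) \<in> set vs'" using pk lens by simp
  then have len2: "length (vs' ! (ps ! l)) = n" using vs' unfolding Tup_def by auto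
  show ?case
  proof (rule nth_equalityI)
    show "length (vs ! (ps ! l)) = length (vs' ! (ps ! l))" using len1 len2 by simp
  next
    fix a assume "a < length (vs ! (ps ! l))"
    then have a: "a < n" using len1 by simp
    define d where "d i = (ms ! l) i - m0 i" for i
    define x where "x i = vs ! i ! a - vs' ! i ! a" for i
    have s0: "(\<Sum>i<k. m0 i * vs ! i ! a) = (\<Sum>i<k. m0 i * vs' ! i ! a)"
      using arg_cong[OF e0, of "\<lambda>y. y ! a"] a lens by (simp add: enc_nth)
    have "enc n vs (ms ! l) = enc n vs' (ms ! l)"
      using arg_cong[OF es, of "\<lambda>y. y ! l"] less.prems lms by simp
    then have "enc n vs (ms ! l) ! a = enc n vs' (ms ! l) ! a" by simp
    then have s1: "(\<Sum>i<k. (ms ! l) i * vs ! i ! a) = (\<Sum>i<k. (ms ! l) i * vs' ! i ! a)"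
      using a lens by (simp only: enc_nth)
    have sum0: "(\<Sum>i<k. d i * x i) = 0"
    proof -
      have "(\<Sum>i<k. d i * x i) = (\<Sum>i<k. (ms ! l) i * vs ! i ! a) - (\<Sum>i<k. (ms ! l) i * vs' ! i ! a)
              - ((\<Sum>i<k. m0 i * vs ! i ! a) - (\<Sum>i<k. m0 i * vs' ! i ! a))"
      proof -
        have "(\<Sum>i<k. d i * x i) = (\<Sum>i<k. ((ms ! l) i * vs ! i ! a - (ms ! l) i * vs' ! i ! a) - (m0 i * vs ! i ! a - m0 i * vs' ! i ! a))"
          unfolding d_def x_def by (intro sum.cong) (auto simp: algebra_simps)
        then show ?thesis by (simp only: sum_subtractf)
      qed
      then show ?thesis using s0 s1 by simp
    qed
    have zero: "d i * x i = 0" if i: "i \<in> {..<k} - {ps ! l}" for i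
    proof (cases "i \<in> set ps")
      case False
      then have "x i = 0" using np i unfolding x_def by simp
      then show ?thesis by simp
    next
      case True
      then obtain j where j: "j < length ps" "ps ! j = i" by (metis in_set_conv_nth)
      have "j \<noteq> l" using j i by auto
      show ?thesis
      proof (cases "j < l")
        case True
        then have "vs ! i = vs' ! i" using less.IH j by blast
        then show ?thesis unfolding x_def by simp
      next
        case False
        then have "l < j" using \<open>j \<noteq> l\<close> by simp
        then have "(ms ! l) (ps ! j) = m0 (ps ! j)" using st j unfolding structured_def by blast
        then show ?thesis unfolding d_def using j by simp
      qed
    qed
    have "(\<Sum>i<k. d i * x i) = d (ps ! l) * x (ps ! l) + (\<Sum>i\<in>{..<k} - {ps ! l}. d i * x i)"
      using pk by (subst sum.remove[of _ "ps ! l"]) auto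
    also have "(\<Sum>i\<in>{..<k} - {ps ! l}. d i * x i) = 0" using zero by (intro sum.neutral) blast
    finally have "d (ps ! l) * x (ps ! l) = 0" using sum0 by simp
    moreover have "d (ps ! l) \<noteq> 0" using st less.prems unfolding structured_def d_def by auto
    ultimately have "x (ps ! l) = 0" by simp
    then show "vs ! (ps ! l) ! a = vs' ! (ps ! l) ! a" unfolding x_def by simp
  qed
qed

lemma KC:
  fixes B :: "'a::{field,finite} list set"
  assumes st: "structured k m0 ms ps" and finB: "finite B"
  shows "card {vs \<in> Tup n k. enc n vs m0 \<in> B \<and> (\<forall>m\<in>set ms. enc n vs m \<in> B)}
           \<le> card B ^ Suc (length ps) * (card (UNIV::'a set) ^ n) ^ (k - length ps)"
proof -
  define X where "X = {vs \<in> Tup n k. enc n vs m0 \<in> B \<and> (\<forall>m\<in>set ms. enc n vs m \<in> B)}"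
  define NP where "NP = {..<k} - set ps"
  define F where "F vs = (enc n vs m0, map (enc n vs) ms, restrict (\<lambda>i. vs ! i) NP)" for vs :: "'a list list"
  define T where "T = B \<times> {ys. set ys \<subseteq> B \<and> length ys = length ps} \<times> PiE NP (\<lambda>_. {v::'a list. length v = n})"
  have lms: "length ms = length ps" using st unfolding structured_def by simp
  have inj: "inj_on F X"
  proof (rule inj_onI)
    fix vs vs' assume vsX: "vs \<in> X" and vs'X: "vs' \<in> X" and eq: "F vs = F vs'"
    have vs: "vs \<in> Tup n k" and vs': "vs' \<in> Tup n k" using vsX vs'X unfolding X_def by auto
    have e0: "enc n vs m0 = enc n vs' m0" and es: "map (enc n vs) ms = map (enc n vs') ms"
      and r: "restrict (\<lambda>i. vs ! i) NP = restrict (\<lambda>i. vs' ! i) NP"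
      using eq unfolding F_def by auto
    have np: "vs ! i = vs' ! i" if "i < k" "i \<notin> set ps" for i
    proof -
      have "i \<in> NP" using that unfolding NP_def by simp
      then show ?thesis using fun_cong[OF r, of i] by simp
    qed
    have piv: "vs ! (ps ! l) = vs' ! (ps ! l)" if "l < length ps" for l
      using pivot_eq[OF vs vs' st e0 es np that] by blast
    have lens: "length vs = k" "length vs' = k" using vs vs' unfolding Tup_def by auto
    show "vs = vs'"
    proof (rule nth_equalityI)
      show "length vs = length vs'" using lens by simp
    next
      fix i assume "i < length vs"
      then have i: "i < k" using lens by simp
      show "vs ! i = vs' ! i"
      proof (cases "i \<in> set ps")
        case True
        then obtain l where "l < length ps" "ps ! l = i" by (metis in_set_conv_nth)
        then show ?thesis using piv by blast
      next
        case False
        then show ?thesis using np i by blast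
      qed
    qed
  qed
  have img: "F ` X \<subseteq> T"
  proof
    fix y assume "y \<in> F ` X"
    then obtain vs where vs: "vs \<in> X" "y = F vs" by blast
    have lens: "length vs = k" "set vs \<subseteq> {v. length v = n}" using vs unfolding X_def Tup_def by auto
    have "restrict (\<lambda>i. vs ! i) NP \<in> PiE NP (\<lambda>_. {v::'a list. length v = n})"
      using lens unfolding NP_def by (auto dest: nth_mem)
    moreover have "set (map (enc n vs) ms) \<subseteq> B" using vs unfolding X_def by auto
    ultimately show "y \<in> T" using vs lms unfolding T_def F_def X_def by auto
  qed
  have finT: "finite T" unfolding T_def
    by (intro finite_cartesian_product finite_lists_length_eq finB finite_PiE) (auto simp: NP_def finite_lists_n)
  have cardNP: "card NP = k - length ps"
  proof -
    have "set ps \<subseteq> {..<k}" "distinct ps" using st unfolding structured_def by auto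
    then show ?thesis unfolding NP_def by (simp add: card_Diff_subset distinct_card)
  qed
  have "card X \<le> card T" using card_inj_on_le[OF inj img finT] .
  also have "card T = card B * card B ^ length ps * (card (UNIV::'a set) ^ n) ^ (k - length ps)"
  proof -
    have "finite NP" unfolding NP_def by simp
    then have "card (PiE NP (\<lambda>_. {v::'a list. length v = n})) = (card (UNIV::'a set) ^ n) ^ (k - length ps)"
      by (simp add: card_PiE cardNP card_lists_n)
    then show ?thesis unfolding T_def using finB
      by (simp add: card_cartesian_product card_lists_length_eq)
  qed
  finally show ?thesis unfolding X_def by simp
qed

lemma indep_tuples_eq: "indep_tuples n k = {vs \<in> Tup n k. lin_indep_vecs n vs}"
  unfolding indep_tuples_def Tup_def by auto

lemma card_Msg: "card (Msg k :: (nat \<Rightarrow> 'a::finite) set) = card (UNIV::'a set) ^ k"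
  unfolding Msg_def by (simp add: card_PiE)

lemma finite_Msg: "finite (Msg k :: (nat \<Rightarrow> 'a::finite) set)"
  unfolding Msg_def by (intro finite_PiE) auto

lemma dep_cover:
  fixes vs :: "'a::field list list"
  assumes vs: "vs \<in> Tup n k" and nd: "\<not> lin_indep_vecs n vs"
  shows "\<exists>i<k. vs ! i \<in> enc n (take i vs) ` Msg i"
proof -
  have lvs: "length vs = k" using vs unfolding Tup_def by simp
  from nd obtain c where c0: "\<forall>j<n. (\<Sum>i<k. c i * vs ! i ! j) = 0" and c1: "\<exists>i<k. c i \<noteq> 0"
    unfolding lin_indep_vecs_def lvs by blast
  define Z where "Z = {i. i < k \<and> c i \<noteq> 0}"
  have finZ: "finite Z" "Z \<noteq> {}" using c1 unfolding Z_def by auto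
  define i0 where "i0 = Max Z"
  have i0Z: "i0 \<in> Z" using finZ unfolding i0_def by simp
  then have i0k: "i0 < k" and ci0: "c i0 \<noteq> 0" unfolding Z_def by auto
  have above: "c i = 0" if "i0 < i" "i < k" for i
  proof (rule ccontr)
    assume "c i \<noteq> 0"
    then have "i \<in> Z" using that unfolding Z_def by simp
    then have "i \<le> i0" using finZ unfolding i0_def by simp
    then show False using that by simp
  qed
  define m where "m = restrict (\<lambda>i. - c i / c i0) {..<i0}"
  have mM: "m \<in> Msg i0" unfolding m_def Msg_def by simp
  have "vs ! i0 = enc n (take i0 vs) m"
  proof (rule nth_equalityI)
    have "vs ! i0 \<in> set vs" using i0k lvs by simp
    then have "length (vs ! i0) = n" using vs unfolding Tup_def by auto
    then show "length (vs ! i0) = length (enc n (take i0 vs) m)" by simp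
  next
    fix j assume "j < length (vs ! i0)"
    then have j: "j < n" using vs i0k lvs unfolding Tup_def by (auto dest: nth_mem)
    have "(\<Sum>i<k. c i * vs ! i ! j) = (\<Sum>i<Suc i0. c i * vs ! i ! j)"
      using i0k above by (intro sum.mono_neutral_right) auto
    also have "\<dots> = (\<Sum>i<i0. c i * vs ! i ! j) + c i0 * vs ! i0 ! j" by simp
    finally have "(\<Sum>i<i0. c i * vs ! i ! j) + c i0 * vs ! i0 ! j = 0" using c0 j by simp
    then have "vs ! i0 ! j = - (\<Sum>i<i0. c i * vs ! i ! j) / c i0" using ci0 by (simp add: field_simps eq_neg_iff_add_eq_0)
    also have "\<dots> = (\<Sum>i<i0. (- c i / c i0) * vs ! i ! j)"
      by (simp add: sum_divide_distrib sum_negf)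
    also have "\<dots> = (\<Sum>i<i0. m i * take i0 vs ! i ! j)"
      unfolding m_def by (intro sum.cong) auto
    also have "\<dots> = enc n (take i0 vs) m ! j" using j i0k lvs by (simp add: enc_nth min_def)
    finally show "vs ! i0 ! j = enc n (take i0 vs) m ! j" .
  qed
  then show ?thesis using i0k mM by blast
qed

lemma card_dep_i:
  assumes i: "i < k"
  shows "card {vs \<in> (Tup n k :: 'a::{field,finite} list list set). vs ! i \<in> enc n (take i vs) ` Msg i}
    \<le> (card (UNIV::'a set) ^ n) ^ (k - 1) * card (UNIV::'a set) ^ i"
proof -
  define q where "q = card (UNIV::'a set)"
  define X where "X = {vs \<in> (Tup n k :: 'a list list set). vs ! i \<in> enc n (take i vs) ` Msg i}"
  define G where "G vs = ((take i vs, vs ! i), drop (Suc i) vs)" for vs :: "'a list list"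
  define T where "T = Sigma (Tup n i) (\<lambda>tk. enc n tk ` (Msg i :: (nat \<Rightarrow> 'a) set)) \<times> (Tup n (k - Suc i) :: 'a list list set)"
  have inj: "inj_on G X"
  proof (rule inj_onI)
    fix x y assume "x \<in> X" "y \<in> X" "G x = G y"
    then have "length x = k" "length y = k" "take i x = take i y" "x ! i = y ! i" "drop (Suc i) x = drop (Suc i) y"
      unfolding X_def Tup_def G_def by auto
    then show "x = y" using i id_take_nth_drop[of i x] id_take_nth_drop[of i y] by simp
  qed
  have img: "G ` X \<subseteq> T"
  proof
    fix z assume "z \<in> G ` X"
    then obtain vs where vs: "vs \<in> X" "z = G vs" by blast
    then have "length vs = k" "set vs \<subseteq> {v. length v = n}" unfolding X_def Tup_def by auto
    then have "take i vs \<in> Tup n i" "drop (Suc i) vs \<in> Tup n (k - Suc i)" using i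
      unfolding Tup_def by (auto dest: in_set_takeD in_set_dropD)
    then show "z \<in> T" using vs i unfolding T_def G_def X_def by auto
  qed
  have fT: "finite (Tup n i :: 'a list list set)" by (rule finite_Tup)
  have fM: "\<And>tk. finite (enc n tk ` (Msg i :: (nat \<Rightarrow> 'a) set))" by (intro finite_imageI finite_Msg)
  have finT: "finite T" unfolding T_def by (intro finite_cartesian_product finite_SigmaI fT fM finite_Tup)
  have "card X \<le> card T" by (rule card_inj_on_le[OF inj img finT])
  also have "card T = (\<Sum>tk\<in>Tup n i. card (enc n tk ` (Msg i :: (nat \<Rightarrow> 'a) set))) * card (Tup n (k - Suc i) :: 'a list list set)"
  proof -
    have "card (Sigma (Tup n i) (\<lambda>tk. enc n tk ` (Msg i :: (nat \<Rightarrow> 'a) set))) = (\<Sum>tk\<in>Tup n i. card (enc n tk ` (Msg i :: (nat \<Rightarrow> 'a) set)))"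
      by (rule card_SigmaI[OF fT]) (use fM in blast)
    then show ?thesis unfolding T_def by (simp add: card_cartesian_product)
  qed
  also have "\<dots> \<le> (\<Sum>tk\<in>(Tup n i :: 'a list list set). q ^ i) * card (Tup n (k - Suc i) :: 'a list list set)"
  proof -
    have "card (enc n tk ` (Msg i :: (nat \<Rightarrow> 'a) set)) \<le> q ^ i" for tk
      using card_image_le[OF finite_Msg, of "enc n tk" i] card_Msg[where 'a='a, of i] unfolding q_def by simp
    then show ?thesis by (intro mult_right_mono sum_mono) auto
  qed
  also have "\<dots> = (q ^ n) ^ i * q ^ i * (q ^ n) ^ (k - Suc i)" by (simp add: card_Tup q_def)
  also have "\<dots> = (q ^ n) ^ (k - 1) * q ^ i"
  proof -
    have e: "(q ^ n) ^ (k - 1) = (q ^ n) ^ i * (q ^ n) ^ (k - Suc i)"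
      by (subst power_add[symmetric]) (use i in simp)
    show ?thesis unfolding e by (simp add: mult_ac)
  qed
  finally show ?thesis unfolding X_def q_def .
qed

lemma geom_nat: "(q - 1) * (\<Sum>i<k. q ^ i) = q ^ k - (1::nat)"
proof (induction k)
  case 0 then show ?case by simp
next
  case (Suc k)
  have "(q - 1) * (\<Sum>i<Suc k. q ^ i) = (q ^ k - 1) + (q - 1) * q ^ k" using Suc by (simp add: algebra_simps)
  also have "\<dots> = q ^ Suc k - 1"
  proof (cases "q = 0")
    case True then show ?thesis by (cases k) auto
  next
    case False
    then have "q ^ k \<ge> 1" by simp
    moreover have "q * q ^ k \<ge> q ^ k" using False by simp
    ultimately show ?thesis by (simp add: diff_mult_distrib)
  qed
  finally show ?case .
qed

lemma card_indep_lower: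
  assumes q3: "card (UNIV::'a::{field,finite} set) \<ge> 3" and kn: "k \<le> n"
  shows "real (card (indep_tuples n k :: 'a list list set)) \<ge> real ((card (UNIV::'a set) ^ n) ^ k) / 2"
proof -
  define q where "q = card (UNIV::'a set)"
  define V where "V = (indep_tuples n k :: 'a list list set)"
  have VT: "V \<subseteq> Tup n k" unfolding V_def indep_tuples_eq by auto
  have "Tup n k - V \<subseteq> (\<Union>i<k. {vs \<in> (Tup n k :: 'a list list set). vs ! i \<in> enc n (take i vs) ` Msg i})"
  proof
    fix vs assume a: "vs \<in> Tup n k - V"
    then have "vs \<in> Tup n k" "\<not> lin_indep_vecs n vs" unfolding V_def indep_tuples_eq by auto
    from dep_cover[OF this] obtain i where "i < k" "vs ! i \<in> enc n (take i vs) ` Msg i" by blast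
    then show "vs \<in> (\<Union>i<k. {vs \<in> (Tup n k :: 'a list list set). vs ! i \<in> enc n (take i vs) ` Msg i})"
      using a by blast
  qed
  then have "card (Tup n k - V) \<le> card (\<Union>i<k. {vs \<in> (Tup n k :: 'a list list set). vs ! i \<in> enc n (take i vs) ` Msg i})"
    by (intro card_mono finite_UN_I) (auto intro: finite_subset[OF _ finite_Tup[where 'a='a, of n k]])
  also have "\<dots> \<le> (\<Sum>i<k. card {vs \<in> (Tup n k :: 'a list list set). vs ! i \<in> enc n (take i vs) ` Msg i})"
    by (rule card_UN_le) simp
  also have "\<dots> \<le> (\<Sum>i<k. (q ^ n) ^ (k - 1) * q ^ i)"
    using card_dep_i[where 'a='a, of _ k n] unfolding q_def by (intro sum_mono) simp
  also have "\<dots> = (q ^ n) ^ (k - 1) * (\<Sum>i<k. q ^ i)" by (simp add: sum_distrib_left)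
  finally have c1: "card (Tup n k - V) \<le> (q ^ n) ^ (k - 1) * (\<Sum>i<k. q ^ i)" .
  have "2 * (\<Sum>i<k. q ^ i) \<le> (q - 1) * (\<Sum>i<k. q ^ i)" using q3 unfolding q_def by (intro mult_right_mono) auto
  also have "\<dots> = q ^ k - 1" by (rule geom_nat)
  also have "\<dots> \<le> q ^ n"
  proof -
    have "q ^ k \<le> q ^ n" using q3 kn unfolding q_def by (intro power_increasing) auto
    then show ?thesis by linarith
  qed
  finally have g: "2 * (\<Sum>i<k. q ^ i) \<le> q ^ n" .
  have "2 * card (Tup n k - V) \<le> (q ^ n) ^ k"
  proof (cases k)
    case 0
    then show ?thesis using c1 by simp
  next
    case (Suc k')
    have "2 * card (Tup n k - V) \<le> (q ^ n) ^ (k - 1) * (2 * (\<Sum>i<k. q ^ i))" using c1 by simp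
    also have "\<dots> \<le> (q ^ n) ^ (k - 1) * q ^ n" using g by (intro mult_left_mono) auto
    also have "\<dots> = (q ^ n) ^ k" using Suc by simp
    finally show ?thesis .
  qed
  moreover have "card (Tup n k - V) = card (Tup n k :: 'a list list set) - card V"
    by (meson VT card_Diff_subset finite_Tup finite_subset)
  moreover have "card V \<le> card (Tup n k :: 'a list list set)" by (rule card_mono[OF finite_Tup VT])
  ultimately have "(q ^ n) ^ k \<le> 2 * card V" unfolding card_Tup q_def by linarith
  then have "real ((q ^ n) ^ k) \<le> 2 * real (card V)" by linarith
  then show ?thesis unfolding V_def q_def by simp
qed

definition ball :: "'a list \<Rightarrow> nat \<Rightarrow> nat \<Rightarrow> nat \<Rightarrow> 'a list set" where
  "ball r I D n = {c. length c = n \<and> (\<exists>i d. i \<le> I \<and> d \<le> D \<and> obtainable c i d r)}"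

lemma ball_sub:
  assumes "c \<in> ball r I D n"
  shows "max (n - D) (length r - I) \<le> n \<and> max (n - D) (length r - I) \<le> length r \<and>
         (\<exists>s \<in> sub_set r (max (n - D) (length r - I)). c \<in> sup_set s n)"
proof -
  define l where "l = max (n - D) (length r - I)"
  from assms obtain i d where c: "length c = n" "i \<le> I" "d \<le> D" "obtainable c i d r"
    unfolding ball_def by blast
  from obtainable_common[OF c(4)] obtain s where
    s: "subseq s c" "subseq s r" "length c \<le> length s + d" "length r \<le> length s + i" by blast
  have ls: "l \<le> length s" using s c unfolding l_def by auto
  have "length s \<le> n" "length s \<le> length r" using s c by (auto dest: list_emb_length)
  then have ln: "l \<le> n" "l \<le> length r" using ls by auto
  define s1 where "s1 = take l s"
  have "subseq s1 s" unfolding s1_def by (rule prefix_imp_subseq[OF take_is_prefix])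
  then have "subseq s1 r" "subseq s1 c" using s subseq_order.order_trans by blast+
  moreover have "length s1 = l" using ls unfolding s1_def by simp
  ultimately show ?thesis using ln c(1) unfolding l_def sub_set_def sup_set_def by auto
qed

lemma card_ball_le:
  fixes Y :: real
  assumes "\<And>s. s \<in> sub_set r (max (n - D) (length r - I)) \<Longrightarrow> real (card (sup_set (s::'a::finite list) n)) \<le> Y"
  shows "real (card (ball r I D n)) \<le> real (card (sub_set r (max (n - D) (length r - I)))) * Y"
proof -
  define l where "l = max (n - D) (length r - I)"
  have "ball r I D n \<subseteq> (\<Union>s\<in>sub_set r l. sup_set s n)"
  proof
    fix c assume "c \<in> ball r I D n"
    from ball_sub[OF this] obtain s where "s \<in> sub_set r l" "c \<in> sup_set s n" unfolding l_def by blast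
    then show "c \<in> (\<Union>s\<in>sub_set r l. sup_set s n)" by blast
  qed
  then have "card (ball r I D n) \<le> card (\<Union>s\<in>sub_set r l. sup_set s n)"
    by (intro card_mono finite_UN_I finite_sub_set finite_sup_set)
  also have "\<dots> \<le> (\<Sum>s\<in>sub_set r l. card (sup_set s n))" by (rule card_UN_le[OF finite_sub_set])
  finally have "real (card (ball r I D n)) \<le> real (\<Sum>s\<in>sub_set r l. card (sup_set s n))"
    by (simp only: of_nat_le_iff)
  also have "\<dots> = (\<Sum>s\<in>sub_set r l. real (card (sup_set s n)))" by (rule of_nat_sum)
  also have "\<dots> \<le> (\<Sum>s\<in>sub_set r l. Y)" using assms unfolding l_def by (intro sum_mono) auto
  also have "\<dots> = real (card (sub_set r l)) * Y" by simp
  finally show ?thesis unfolding l_def .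
qed

lemma gibbs2:
  fixes y k :: real
  assumes "0 < y" "y < 1" "0 < k" "k < 1"
  shows "y * ln (k / y) + (1 - y) * ln ((1 - k) / (1 - y)) \<le> 0"
proof -
  have "ln (k / y) \<le> k / y - 1" using assms by (intro ln_le_minus_one) simp
  then have a: "y * ln (k / y) \<le> y * (k / y - 1)" using assms by (intro mult_left_mono) auto
  have "ln ((1 - k) / (1 - y)) \<le> (1 - k) / (1 - y) - 1" using assms by (intro ln_le_minus_one) simp
  then have b: "(1 - y) * ln ((1 - k) / (1 - y)) \<le> (1 - y) * ((1 - k) / (1 - y) - 1)" using assms by (intro mult_left_mono) auto
  have "y * (k / y - 1) + (1 - y) * ((1 - k) / (1 - y) - 1) = 0" using assms by (simp add: field_simps)
  then show ?thesis using a b by linarith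
qed

lemma beta_ge1:
  fixes q y k :: real
  assumes "0 < y" "y \<le> k" "k < (q - 1) / q" "q \<ge> 2"
  shows "y * (1 + k - 2 * y) \<le> (q - 1) * (1 - y) ^ 2"
proof -
  have qk: "q * k < q - 1" using assms by (simp add: less_divide_eq mult.commute)
  have "(q - 1) / q < 1" using assms by simp
  then have k1: "k < 1" using assms by linarith
  have f1: "(1 - k) * (q - 1 - q * k) \<ge> 0" using qk k1 by (intro mult_nonneg_nonneg) auto
  have "(2 * q + 1) * k \<le> 2 * q - 1" using qk k1 by (simp add: algebra_simps)
  moreover have "(q + 1) * (y + k) \<le> (q + 1) * (2 * k)" using assms by (intro mult_left_mono) auto
  ultimately have "(2 * q - 1 + k) - (q + 1) * (y + k) \<ge> 0" by (simp add: algebra_simps)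
  then have f2: "(k - y) * ((2 * q - 1 + k) - (q + 1) * (y + k)) \<ge> 0" using assms by (intro mult_nonneg_nonneg) auto
  have "(q - 1) * (1 - y) ^ 2 - y * (1 + k - 2 * y) = (k - y) * ((2 * q - 1 + k) - (q + 1) * (y + k)) + (1 - k) * (q - 1 - q * k)"
    by (simp add: power2_eq_square algebra_simps)
  then show ?thesis using f1 f2 by linarith
qed

lemma pow_exp: "0 < (x::real) \<Longrightarrow> x ^ j = exp (real j * ln x)"
  by (simp add: exp_of_nat_mult)

lemma sub_exp:
  fixes g M :: real
  assumes g: "0 \<le> g" "g < M" and l: "l \<le> length r" and g0: "g = 0 \<Longrightarrow> l = length r"
  shows "real (card (sub_set r l)) \<le> exp (real (length r - l) * ln (M / g) + real l * ln (M / (M - g)))"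
proof (cases "g = 0")
  case True
  then have "l = length r" using g0 by simp
  then have "real (card (sub_set r l)) \<le> 1" using sub_set_full[of r] by simp
  moreover have "M / (M - g) = 1" using True g by simp
  ultimately show ?thesis using \<open>l = length r\<close> by simp
next
  case False
  then have gp: "0 < g" using g by simp
  define p where "p = g / M"
  have Mp: "0 < M" using g by simp
  have p: "0 < p" "p < 1" unfolding p_def using gp g Mp by (auto simp: field_simps)
  have e1: "1 / p = M / g" unfolding p_def by simp
  have e2: "1 / (1 - p) = M / (M - g)" unfolding p_def using Mp by (simp add: field_simps)
  have "real (card (sub_set r l)) \<le> (1/p) ^ (length r - l) * (1/(1-p)) ^ l"
    by (rule sub_set_bound[OF p l])
  also have "\<dots> = exp (real (length r - l) * ln (M / g)) * exp (real l * ln (M / (M - g)))"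
    unfolding e1 e2 using gp Mp g by (simp add: pow_exp)
  also have "\<dots> = exp (real (length r - l) * ln (M / g) + real l * ln (M / (M - g)))"
    by (simp add: exp_add)
  finally show ?thesis .
qed

lemma sup_exp:
  fixes p q :: real
  assumes q: "q = real (card (UNIV::'a::finite set))" "q \<ge> 2"
    and p: "0 \<le> p" "p \<le> (q - 1) / q"
    and l: "length (s::'a list) \<le> n" and p0: "p = 0 \<Longrightarrow> length s = n"
  shows "real (card (sup_set s n)) \<le> exp (real (n - length s) * ln ((q - 1) / p) - real (length s) * ln (1 - p))"
proof (cases "p = 0")
  case True
  then have "length s = n" using p0 by simp
  then have "real (card (sup_set s n)) \<le> 1" using sup_set_full[of s] by simp
  then show ?thesis using \<open>length s = n\<close> True by simp
next
  case False
  then have pp: "0 < p" using p by simp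
  have "(q - 1) / q < 1" using q by simp
  then have p1: "p < 1" using p by linarith
  have "real (card (sup_set s n)) \<le> ((q - 1)/p) ^ (n - length s) * (1/(1-p)) ^ length s"
    using sup_set_bound[OF pp, of s n] p l unfolding q by simp
  also have "\<dots> = exp (real (n - length s) * ln ((q - 1) / p)) * exp (real (length s) * ln (1 / (1 - p)))"
    using pp p1 q by (simp add: pow_exp)
  also have "\<dots> = exp (real (n - length s) * ln ((q - 1) / p) - real (length s) * ln (1 - p))"
    using p1 by (simp add: exp_add[symmetric] ln_div)
  finally show ?thesis .
qed

lemma h_mono:
  fixes q y k :: real
  assumes "0 < y" "y \<le> k" "k < (q - 1) / q" "q \<ge> 2"
  shows "y * ln ((q - 1) / y) - (1 - y) * ln (1 - y) \<le> k * ln ((q - 1) / k) - (1 - k) * ln (1 - k)"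
proof -
  have "(q - 1) / q < 1" using assms by simp
  then have k1: "k < 1" using assms by linarith
  have k0: "0 < k" using assms by linarith
  have qk: "q * k \<le> q - 1" using assms by (simp add: less_divide_eq mult.commute)
  have g: "y * ln (k / y) + (1 - y) * ln ((1 - k) / (1 - y)) \<le> 0"
    using gibbs2[of y k] assms k1 k0 by linarith
  have "y * ln ((q - 1) / y) - (1 - y) * ln (1 - y) - (y * ln ((q - 1) / k) - (1 - y) * ln (1 - k))
      = y * ln (k / y) + (1 - y) * ln ((1 - k) / (1 - y))"
    using assms k1 k0 by (simp add: ln_div algebra_simps)
  then have s1: "y * ln ((q - 1) / y) - (1 - y) * ln (1 - y) \<le> y * ln ((q - 1) / k) - (1 - y) * ln (1 - k)"
    using g by linarith
  have "1 \<le> (q - 1) * (1 - k) / k" using qk k0 by (simp add: field_simps)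
  then have "0 \<le> ln ((q - 1) * (1 - k) / k)" by simp
  also have "ln ((q - 1) * (1 - k) / k) = ln ((q - 1) / k) + ln (1 - k)"
    using k0 k1 assms by (simp add: ln_div ln_mult)
  finally have sig: "0 \<le> ln ((q - 1) / k) + ln (1 - k)" .
  have "(k - y) * (ln ((q - 1) / k) + ln (1 - k)) \<ge> 0" using sig assms by simp
  then have "y * ln ((q - 1) / k) - (1 - y) * ln (1 - k) \<le> k * ln ((q - 1) / k) - (1 - k) * ln (1 - k)"
    by (simp add: algebra_simps)
  then show ?thesis using s1 by linarith
qed

lemma ball_bound:
  fixes g k q :: real and r :: "'a::finite list"
  assumes q: "q = real (card (UNIV::'a set))" "q \<ge> 2"
    and g: "0 \<le> g" and k: "0 \<le> k" "k < (q - 1) / q"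
  defines "M \<equiv> 2 * g - k + 1"
  shows "real (card (ball r (nat \<lfloor>g * real n\<rfloor>) (nat \<lfloor>k * real n\<rfloor>) n))
    \<le> M / (M - g) * exp (real n * (g * ln (M / g) + (M - g) * ln (M / (M - g)) + k * ln ((q - 1) / k) - (1 - k) * ln (1 - k)))"
proof -
  define E where "E = g * ln (M / g) + (M - g) * ln (M / (M - g)) + k * ln ((q - 1) / k) - (1 - k) * ln (1 - k)"
  define I where "I = nat \<lfloor>g * real n\<rfloor>"
  define D where "D = nat \<lfloor>k * real n\<rfloor>"
  define m where "m = length r"
  define l where "l = max (n - D) (m - I)"
  have "(q - 1) / q < 1" using q by simp
  then have k1: "k < 1" using k by linarith
  have MG: "M - g = 1 - k + g" unfolding M_def by simp
  have MGp: "0 < M - g" using MG k1 g by linarith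
  have Mp: "0 < M" using MGp g by linarith
  have K1: "1 \<le> M / (M - g)" using MGp g by (simp add: field_simps)
  have lnK: "0 \<le> ln (M / (M - g))" using K1 by simp
  have I1: "real I \<le> g * real n" unfolding I_def using g by (simp add: of_nat_nat)
  have I2: "g * real n - 1 < real I" unfolding I_def using g
    by (metis floor_correct of_int_floor_le le_nat_floor of_nat_nat floor_less_iff zero_le_floor mult_nonneg_nonneg of_nat_0_le_iff diff_less_eq real_of_int_floor_add_one_gt)
  have D1: "real D \<le> k * real n" unfolding D_def using k by (simp add: of_nat_nat)
  have D2: "k * real n - 1 < real D" unfolding D_def using k
    by (metis floor_correct of_int_floor_le le_nat_floor of_nat_nat floor_less_iff zero_le_floor mult_nonneg_nonneg of_nat_0_le_iff diff_less_eq real_of_int_floor_add_one_gt)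
  show ?thesis
  proof (cases "ball r I D n = {}")
    case True
    then have z: "real (card (ball r I D n)) = 0" by simp
    have nn: "0 \<le> M / (M - g) * exp (real n * E)" using K1 by (intro mult_nonneg_nonneg) auto
    show ?thesis using z nn unfolding I_def D_def E_def by linarith
  next
    case False
    then obtain c where "c \<in> ball r I D n" by blast
    from ball_sub[OF this] have ln: "l \<le> n" "l \<le> m" unfolding l_def m_def by auto
    define iota where "iota = m - l"
    define delta where "delta = n - l"
    have iI: "iota \<le> I" unfolding iota_def l_def by simp
    have dD: "delta \<le> D" unfolding delta_def l_def by simp
    have rl: "real l = real n - real delta" unfolding delta_def using ln by simp
    have g0: "g = 0 \<Longrightarrow> l = m"
    proof -
      assume "g = 0"
      then have "I = 0" unfolding I_def by simp
      then show "l = m" using ln unfolding l_def by simp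
    qed
    have k0: "k = 0 \<Longrightarrow> l = n"
    proof -
      assume "k = 0"
      then have "D = 0" unfolding D_def by simp
      then show "l = n" using ln unfolding l_def by simp
    qed
    have subB: "real (card (sub_set r l)) \<le> exp (real iota * ln (M / g) + real l * ln (M / (M - g)))"
      unfolding iota_def m_def using sub_exp[OF g _ _ g0[unfolded m_def]] MGp ln unfolding m_def by simp
    have a1: "real iota * ln (M / g) \<le> g * real n * ln (M / g)"
    proof (cases "g = 0")
      case True
      then show ?thesis using g0 unfolding iota_def by simp
    next
      case False
      then have "0 \<le> ln (M / g)" using g MGp by (simp add: field_simps)
      moreover have "real iota \<le> g * real n" using iI I1 by linarith
      ultimately show ?thesis by (intro mult_right_mono) auto
    qed
    define p2 where "p2 = (if 0 < g \<and> delta + I < D then k - g else k)"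
    have p2a: "0 \<le> p2" "p2 \<le> (q - 1) / q"
    proof -
      show "0 \<le> p2"
      proof (cases "0 < g \<and> delta + I < D")
        case True
        then have "I + 1 \<le> D" by simp
        then have "real I + 1 \<le> real D" by linarith
        then have "g * real n < k * real n" using I2 D1 by linarith
        then have "g < k" by (metis mult_right_less_imp_less of_nat_0_le_iff)
        then show ?thesis unfolding p2_def using True by simp
      next
        case False
        then have "p2 = k" unfolding p2_def by (rule if_not_P)
        then show ?thesis using k by simp
      qed
      show "p2 \<le> (q - 1) / q" unfolding p2_def using k g by auto
    qed
    have p20: "p2 = 0 \<Longrightarrow> l = n"
    proof -
      assume a: "p2 = 0"
      show "l = n"
      proof (cases "0 < g \<and> delta + I < D")
        case True
        then have "I + 1 \<le> D" by simp
        then have "real I + 1 \<le> real D" by linarith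
        then have "g * real n < k * real n" using I2 D1 by linarith
        then have "g < k" by (metis mult_right_less_imp_less of_nat_0_le_iff)
        then show ?thesis using a True unfolding p2_def by simp
      next
        case False
        then have "p2 = k" unfolding p2_def by (rule if_not_P)
        then show ?thesis using a k0 by simp
      qed
    qed
    define X where "X = real iota * ln (M / g) + real l * ln (M / (M - g)) + (real delta * ln ((q - 1) / p2) - real l * ln (1 - p2))"
    have "real (card (ball r I D n)) \<le> real (card (sub_set r l)) * exp (real delta * ln ((q - 1) / p2) - real l * ln (1 - p2))"
    proof -
      have "real (card (sup_set s n)) \<le> exp (real delta * ln ((q - 1) / p2) - real l * ln (1 - p2))"
        if "s \<in> sub_set r l" for s
      proof -
        have ls: "length s = l" using that unfolding sub_set_def by simp
        show ?thesis using sup_exp[OF q p2a, of s n] ls ln p20 unfolding delta_def by simp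
      qed
      then show ?thesis using card_ball_le[of r n D I] unfolding l_def m_def by simp
    qed
    also have "\<dots> \<le> exp (real iota * ln (M / g) + real l * ln (M / (M - g))) * exp (real delta * ln ((q - 1) / p2) - real l * ln (1 - p2))"
      using subB by (intro mult_right_mono) auto
    also have "\<dots> = exp X" unfolding X_def by (simp add: exp_add[symmetric])
    finally have cX: "real (card (ball r I D n)) \<le> exp X" .
    have XE: "X \<le> real n * E + ln (M / (M - g))"
    proof (cases "0 < g \<and> delta + I < D")
      case False
      then have p2k: "p2 = k" unfolding p2_def by (rule if_not_P)
      have a2: "real l * ln (M / (M - g)) \<le> (M - g) * real n * ln (M / (M - g)) + ln (M / (M - g))"
      proof (cases "g = 0")
        case True
        then show ?thesis using Mp by simp
      next
        case gne: False
        then have "D \<le> delta + I" using False g by auto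
        then have "real l \<le> real n - real D + real I" using rl by linarith
        also have "\<dots> \<le> (M - g) * real n + 1"
        proof -
          have "(M - g) * real n = real n - k * real n + g * real n" unfolding MG by (simp add: algebra_simps)
          then show ?thesis using D2 I1 by linarith
        qed
        finally have "real l \<le> (M - g) * real n + 1" .
        then have "real l * ln (M / (M - g)) \<le> ((M - g) * real n + 1) * ln (M / (M - g))"
          using lnK by (intro mult_right_mono) auto
        then show ?thesis by (simp add: algebra_simps)
      qed
      have a3: "real delta * ln ((q - 1) / k) - real l * ln (1 - k) \<le> real n * (k * ln ((q - 1) / k) - (1 - k) * ln (1 - k))"
      proof (cases "k = 0")
        case True
        then have "delta = 0" "l = n" using k0 unfolding delta_def by auto
        then show ?thesis using True by simp
      next
        case kne: False
        then have kp: "0 < k" using k by simp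
        have qk: "q * k \<le> q - 1" using k q by (simp add: less_divide_eq mult.commute)
        have "1 \<le> (q - 1) * (1 - k) / k" using qk kp by (simp add: field_simps)
        then have "0 \<le> ln ((q - 1) * (1 - k) / k)" by simp
        also have "ln ((q - 1) * (1 - k) / k) = ln ((q - 1) / k) + ln (1 - k)"
          using kp k1 q by (simp add: ln_div ln_mult)
        finally have sig: "0 \<le> ln ((q - 1) / k) + ln (1 - k)" .
        have dk: "real delta \<le> k * real n" using dD D1 by linarith
        have "real delta * ln ((q - 1) / k) - real l * ln (1 - k) = - real n * ln (1 - k) + real delta * (ln ((q - 1) / k) + ln (1 - k))"
          unfolding rl by (simp add: algebra_simps)
        also have "\<dots> \<le> - real n * ln (1 - k) + (k * real n) * (ln ((q - 1) / k) + ln (1 - k))"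
          using dk sig by (intro add_left_mono mult_right_mono) auto
        also have "\<dots> = real n * (k * ln ((q - 1) / k) - (1 - k) * ln (1 - k))" by (simp add: algebra_simps)
        finally show ?thesis .
      qed
      have "X \<le> g * real n * ln (M / g) + ((M - g) * real n * ln (M / (M - g)) + ln (M / (M - g)))
               + real n * (k * ln ((q - 1) / k) - (1 - k) * ln (1 - k))"
        unfolding X_def p2k using a1 a2 a3 by linarith
      also have "\<dots> = real n * E + ln (M / (M - g))" unfolding E_def by (simp add: algebra_simps)
      finally show ?thesis .
    next
      case True
      define y where "y = k - g"
      have p2y: "p2 = y" unfolding p2_def y_def using True by simp
      have gp: "0 < g" using True by simp
      have "I + 1 \<le> D" using True by simp
      then have "real I + 1 \<le> real D" by linarith
      then have "g * real n < k * real n" using I2 D1 by linarith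
      then have gk: "g < k" by (metis mult_right_less_imp_less of_nat_0_le_iff)
      then have y0: "0 < y" unfolding y_def by simp
      have yk: "y \<le> k" unfolding y_def using g by simp
      have MGy: "M - g = 1 - y" unfolding y_def using MG by simp
      have My: "M = 1 + k - 2 * y" unfolding y_def M_def by simp
      have y1: "y < 1" using yk k1 by simp
      have dy: "real delta < y * real n"
      proof -
        have "delta + I + 1 \<le> D" using True by simp
        then have "real delta + real I + 1 \<le> real D" by linarith
        then show ?thesis using I2 D1 unfolding y_def by (simp add: algebra_simps)
      qed
      define s where "s = ln ((q - 1) / y) - ln (M / (1 - y)) + ln (1 - y)"
      have s0: "0 \<le> s"
      proof -
        have b: "y * M \<le> (q - 1) * (1 - y) ^ 2" using beta_ge1[OF y0 yk k(2) q(2)] My by simp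
        have "1 \<le> (q - 1) * (1 - y) ^ 2 / (y * M)" using b y0 Mp by (simp add: field_simps)
        then have "0 \<le> ln ((q - 1) * (1 - y) ^ 2 / (y * M))" by simp
        also have "ln ((q - 1) * (1 - y) ^ 2 / (y * M)) = s"
          unfolding s_def using y0 y1 Mp q by (simp add: ln_div ln_mult power2_eq_square)
        finally show ?thesis .
      qed
      have "X = real iota * ln (M / g) + real n * (ln (M / (1 - y)) - ln (1 - y)) + real delta * s"
        unfolding X_def p2y MGy s_def rl by (simp add: algebra_simps)
      also have "\<dots> \<le> g * real n * ln (M / g) + real n * (ln (M / (1 - y)) - ln (1 - y)) + y * real n * s"
      proof -
        have "real delta * s \<le> y * real n * s" using dy s0 by (intro mult_right_mono) auto
        then show ?thesis using a1 by linarith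
      qed
      also have "\<dots> = real n * (g * ln (M / g) + (1 - y) * ln (M / (1 - y)) + (y * ln ((q - 1) / y) - (1 - y) * ln (1 - y)))"
        unfolding s_def by (simp add: algebra_simps)
      also have "\<dots> \<le> real n * (g * ln (M / g) + (1 - y) * ln (M / (1 - y)) + (k * ln ((q - 1) / k) - (1 - k) * ln (1 - k)))"
        using h_mono[OF y0 yk k(2) q(2)] by (intro mult_left_mono add_left_mono) auto
      also have "\<dots> = real n * E" unfolding E_def MGy by (simp add: algebra_simps)
      finally show ?thesis using lnK by linarith
    qed
    have "exp X \<le> exp (real n * E + ln (M / (M - g)))" using XE by simp
    also have "\<dots> = M / (M - g) * exp (real n * E)" using K1 by (simp add: exp_add mult.commute)
    finally show ?thesis using cX unfolding E_def I_def D_def by simp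
  qed
qed

lemma span_eq: "vs \<in> Tup n k \<Longrightarrow> span_vecs n vs = enc n vs ` Msg k"
proof -
  assume vs: "vs \<in> Tup n k"
  then have lk: "length vs = k" unfolding Tup_def by simp
  have "enc n vs c = enc n vs (restrict c {..<k})" for c
    unfolding enc_def lk by (intro map_cong refl sum.cong) auto
  moreover have "restrict c {..<k} \<in> Msg k" for c :: "nat \<Rightarrow> 'a" unfolding Msg_def by simp
  ultimately show ?thesis unfolding span_vecs_def enc_def[symmetric] by blast
qed

definition St :: "nat \<Rightarrow> nat \<Rightarrow> ((nat \<Rightarrow> 'a) \<times> (nat \<Rightarrow> 'a) list \<times> nat list) set" where
  "St k t = {(m0, ms, ps). m0 \<in> Msg k \<and> set ms \<subseteq> Msg k \<and> length ms = t \<and> set ps \<subseteq> {..<k} \<and> length ps = t \<and> structured k m0 ms ps}"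

lemma card_St: "finite (St k t :: ((nat \<Rightarrow> 'a::finite) \<times> _) set) \<and>
   card (St k t :: ((nat \<Rightarrow> 'a::finite) \<times> _) set) \<le> card (UNIV::'a set) ^ k * (card (UNIV::'a set) ^ k) ^ t * k ^ t"
proof -
  define T where "T = (Msg k :: (nat \<Rightarrow> 'a) set) \<times> {ms. set ms \<subseteq> (Msg k :: (nat \<Rightarrow> 'a) set) \<and> length ms = t} \<times> {ps. set ps \<subseteq> {..<k} \<and> length ps = t}"
  have sub: "St k t \<subseteq> T" unfolding St_def T_def by auto
  have finT: "finite T" unfolding T_def
    by (intro finite_cartesian_product finite_Msg finite_lists_length_eq) auto
  have "card T = card (UNIV::'a set) ^ k * (card (UNIV::'a set) ^ k) ^ t * k ^ t"
    unfolding T_def by (simp add: card_cartesian_product card_lists_length_eq finite_Msg card_Msg)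
  then show ?thesis using card_mono[OF finT sub] finite_subset[OF sub finT] by simp
qed

lemma St_empty: "k < t \<Longrightarrow> St k t = {}"
proof -
  assume kt: "k < t"
  have False if "(m0, ms, ps) \<in> St k t" for m0 ms ps
  proof -
    have "distinct ps" "set ps \<subseteq> {..<k}" "length ps = t" using that unfolding St_def structured_def by auto
    then have "t \<le> k" by (metis card_lessThan card_mono distinct_card finite_lessThan)
    then show False using kt by simp
  qed
  then show ?thesis by auto
qed

definition Rs :: "nat \<Rightarrow> 'a list set" where
  "Rs N = {r. length r \<le> N}"

lemma card_Rs: "finite (Rs N :: 'a::finite list set) \<and> card (Rs N :: 'a list set) \<le> (N + 1) * card (UNIV::'a set) ^ N"
proof -
  define q where "q = card (UNIV::'a set)"
  have q1: "1 \<le> q" unfolding q_def using finite_UNIV_card_ge_0[where 'a='a] by simp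
  have eq: "Rs N = (\<Union>m\<in>{..N}. {r::'a list. length r = m})" unfolding Rs_def by auto
  have fin: "finite (Rs N :: 'a list set)" unfolding eq by (intro finite_UN_I finite_lists_n) auto
  have "card (Rs N :: 'a list set) \<le> (\<Sum>m\<in>{..N}. card {r::'a list. length r = m})"
    unfolding eq by (rule card_UN_le) simp
  also have "\<dots> = (\<Sum>m\<in>{..N}. q ^ m)" by (simp add: card_lists_n q_def)
  also have "\<dots> \<le> (\<Sum>m\<in>{..N}. q ^ N)" using q1 by (intro sum_mono power_increasing) auto
  also have "\<dots> = (N + 1) * q ^ N" by simp
  finally show ?thesis using fin unfolding q_def by simp
qed

lemma finite_ball: "finite (ball r I D n :: 'a::finite list set)"
  by (rule finite_subset[OF _ finite_lists_n[of n]]) (auto simp: ball_def)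

lemma union_bound:
  fixes L Bm :: real
  assumes q2: "card (UNIV::'a::{field,finite} set) \<ge> 2"
    and tL: "real (card (UNIV::'a set) ^ t) \<le> L"
    and Bm: "\<And>r. real (card (ball (r::'a list) I D n)) \<le> Bm"
  shows "real (card {vs \<in> (Tup n k :: 'a list list set). \<exists>r. L < real (card {c \<in> span_vecs n vs. \<exists>i d. i \<le> I \<and> d \<le> D \<and> obtainable c i d r})})
    \<le> real ((n + I + 1) * card (UNIV::'a set) ^ (n + I)) * real (card (St k t :: ((nat \<Rightarrow> 'a) \<times> _) set))
       * (Bm ^ Suc t * real ((card (UNIV::'a set) ^ n) ^ (k - t)))"
proof -
  define q where "q = card (UNIV::'a set)"
  define A where "A r st = {vs \<in> (Tup n k :: 'a list list set). enc n vs (fst st) \<in> ball r I D n \<and> (\<forall>m\<in>set (fst (snd st)). enc n vs m \<in> ball r I D n)}" for r and st :: "(nat \<Rightarrow> 'a) \<times> (nat \<Rightarrow> 'a) list \<times> nat list"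
  define Bad where "Bad = {vs \<in> (Tup n k :: 'a list list set). \<exists>r. L < real (card {c \<in> span_vecs n vs. \<exists>i d. i \<le> I \<and> d \<le> D \<and> obtainable c i d r})}"
  have finSt: "finite (St k t :: ((nat \<Rightarrow> 'a) \<times> _) set)" using card_St by blast
  have finRs: "finite (Rs (n + I) :: 'a list set)" using card_Rs by blast
  have Bm0: "0 \<le> Bm" using Bm[of "[]"] by linarith
  have sub: "Bad \<subseteq> (\<Union>r\<in>Rs (n + I). \<Union>st\<in>St k t. A r st)"
  proof
    fix vs assume "vs \<in> Bad"
    then obtain r where vs: "vs \<in> Tup n k" and Lr: "L < real (card {c \<in> span_vecs n vs. \<exists>i d. i \<le> I \<and> d \<le> D \<and> obtainable c i d r})"
      unfolding Bad_def by blast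
    define S where "S = {m \<in> Msg k. enc n vs m \<in> ball r I D n}"
    have "{c \<in> span_vecs n vs. \<exists>i d. i \<le> I \<and> d \<le> D \<and> obtainable c i d r} \<subseteq> enc n vs ` S"
    proof
      fix c assume c: "c \<in> {c \<in> span_vecs n vs. \<exists>i d. i \<le> I \<and> d \<le> D \<and> obtainable c i d r}"
      then obtain m where m: "m \<in> Msg k" "c = enc n vs m" using span_eq[OF vs] by blast
      then have "c \<in> ball r I D n" using c unfolding ball_def by auto
      then show "c \<in> enc n vs ` S" using m unfolding S_def by blast
    qed
    then have "card {c \<in> span_vecs n vs. \<exists>i d. i \<le> I \<and> d \<le> D \<and> obtainable c i d r} \<le> card (enc n vs ` S)"
      by (intro card_mono finite_imageI) (auto simp: S_def intro: finite_subset[OF _ finite_Msg])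
    also have "\<dots> \<le> card S" by (intro card_image_le) (auto simp: S_def intro: finite_subset[OF _ finite_Msg])
    finally have "L < real (card S)" using Lr by linarith
    then have "q ^ t \<le> card S" using tL unfolding q_def by linarith
    from extraction[of S k t, OF _ this[unfolded q_def] q2] obtain m0 ms ps where
      ex: "m0 \<in> S" "set ms \<subseteq> S" "length ps = t" "structured k m0 ms ps" unfolding S_def by blast
    have stin: "(m0, ms, ps) \<in> St k t"
      using ex unfolding St_def S_def structured_def by auto
    have "enc n vs m0 \<in> ball r I D n" using ex unfolding S_def by auto
    then obtain c i d where "length c = n" "i \<le> I" "obtainable c i d r" unfolding ball_def by blast
    then have "length r \<le> n + I" using obtainable_common by (metis add_le_mono dual_order.trans list_emb_length)
    then have rin: "r \<in> Rs (n + I)" unfolding Rs_def by simp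
    have "vs \<in> A r (m0, ms, ps)" using vs ex unfolding A_def S_def by auto
    then show "vs \<in> (\<Union>r\<in>Rs (n + I). \<Union>st\<in>St k t. A r st)" using rin stin by blast
  qed
  have cA: "real (card (A r st)) \<le> Bm ^ Suc t * real ((q ^ n) ^ (k - t))" if st: "st \<in> St k t" for r st
  proof -
    obtain m0 ms ps where st': "st = (m0, ms, ps)" by (cases st) auto
    have stt: "structured k m0 ms ps" "length ps = t" using st unfolding st' St_def by auto
    have "card (A r st) \<le> card (ball r I D n) ^ Suc (length ps) * (q ^ n) ^ (k - length ps)"
      unfolding A_def st' q_def using KC[OF stt(1) finite_ball] by simp
    then have "real (card (A r st)) \<le> real (card (ball r I D n)) ^ Suc t * real ((q ^ n) ^ (k - t))"
      using stt by (metis of_nat_le_iff of_nat_mult of_nat_power)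
    also have "\<dots> \<le> Bm ^ Suc t * real ((q ^ n) ^ (k - t))"
      by (intro mult_right_mono power_mono Bm) auto
    finally show ?thesis .
  qed
  have "card Bad \<le> card (\<Union>r\<in>Rs (n + I). \<Union>st\<in>St k t. A r st)"
    by (intro card_mono sub finite_UN_I finRs finSt) (auto simp: A_def intro: finite_subset[OF _ finite_Tup])
  also have "\<dots> \<le> (\<Sum>r\<in>Rs (n + I). card (\<Union>st\<in>St k t. A r st))" by (rule card_UN_le[OF finRs])
  also have "\<dots> \<le> (\<Sum>r\<in>Rs (n + I). \<Sum>st\<in>St k t. card (A r st))" by (intro sum_mono card_UN_le finSt)
  finally have "real (card Bad) \<le> real (\<Sum>r\<in>Rs (n + I). \<Sum>st\<in>St k t. card (A r st))" by (simp only: of_nat_le_iff)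
  also have "\<dots> = (\<Sum>r\<in>Rs (n + I). \<Sum>st\<in>St k t. real (card (A r st)))" by simp
  also have "\<dots> \<le> (\<Sum>r\<in>(Rs (n + I) :: 'a list set). \<Sum>st\<in>(St k t :: ((nat \<Rightarrow> 'a) \<times> _) set). Bm ^ Suc t * real ((q ^ n) ^ (k - t)))"
    by (intro sum_mono cA)
  also have "\<dots> = real (card (Rs (n + I) :: 'a list set)) * real (card (St k t :: ((nat \<Rightarrow> 'a) \<times> _) set)) * (Bm ^ Suc t * real ((q ^ n) ^ (k - t)))"
    by simp
  also have "\<dots> \<le> real ((n + I + 1) * q ^ (n + I)) * real (card (St k t :: ((nat \<Rightarrow> 'a) \<times> _) set)) * (Bm ^ Suc t * real ((q ^ n) ^ (k - t)))"
  proof -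
    have "real (card (Rs (n + I) :: 'a list set)) \<le> real ((n + I + 1) * q ^ (n + I))"
      using card_Rs[where 'a='a, of "n + I"] unfolding q_def by (simp only: of_nat_le_iff)
    then show ?thesis using Bm0 by (intro mult_right_mono) auto
  qed
  finally show ?thesis unfolding Bad_def q_def .
qed

lemma logmul: "1 < (q::real) \<Longrightarrow> log q x * ln q = ln x"
  by (simp add: log_def)

lemma E_part2:
  fixes q k :: real
  assumes "q > 2" "0 \<le> k" "k < 1"
  shows "Hq q k * ln q = k * ln ((q - 1) / k) - (1 - k) * ln (1 - k)"
proof (cases "k = 0")
  case True then show ?thesis by (simp add: Hq_def)
next
  case False
  then have k0: "0 < k" using assms by simp
  have h: "Hq q k = k * log q (q - 1) - k * log q k - (1 - k) * log q (1 - k)"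
    unfolding Hq_def using False assms by simp
  have "Hq q k * ln q = k * (log q (q - 1) * ln q) - k * (log q k * ln q) - (1 - k) * (log q (1 - k) * ln q)"
    unfolding h by (simp add: algebra_simps)
  also have "\<dots> = k * ln (q - 1) - k * ln k - (1 - k) * ln (1 - k)" using assms by (simp add: logmul)
  also have "\<dots> = k * ln ((q - 1) / k) - (1 - k) * ln (1 - k)"
    using assms k0 by (simp add: ln_div algebra_simps)
  finally show ?thesis .
qed

lemma ringid: "(M * (x * a - x * b - y * c) - (g::real) * a) * l = M * x * (a * l) - M * x * (b * l) - M * y * (c * l) - g * (a * l)"
  by (simp add: algebra_simps)

lemma E_part1:
  fixes q g M :: real
  assumes "q > 2" "0 \<le> g" "g < M"
  shows "(M * Hq q (g / M) - g * log q (q - 1)) * ln q = g * ln (M / g) + (M - g) * ln (M / (M - g))"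
proof (cases "g = 0")
  case True
  have "Hq q (g / M) = 0" using True by (simp add: Hq_def)
  moreover have "M / (M - g) = 1" using True assms by simp
  ultimately show ?thesis using True by simp
next
  case False
  then have g0: "0 < g" using assms by simp
  have M0: "0 < M" using assms by simp
  have x0: "g / M \<noteq> 0" "g / M \<noteq> 1" using g0 M0 assms by (auto simp: field_simps)
  have h: "Hq q (g / M) = g / M * log q (q - 1) - g / M * log q (g / M) - (1 - g / M) * log q (1 - g / M)"
    unfolding Hq_def using x0 by simp
  have "(M * Hq q (g / M) - g * log q (q - 1)) * ln q = M * (g / M) * (log q (q - 1) * ln q) - M * (g / M) * (log q (g / M) * ln q) - M * (1 - g / M) * (log q (1 - g / M) * ln q) - g * (log q (q - 1) * ln q)"
    unfolding h by (rule ringid)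
  also have "\<dots> = M * (g / M) * ln (q - 1) - M * (g / M) * ln (g / M) - M * (1 - g / M) * ln (1 - g / M) - g * ln (q - 1)"
  proof -
    have q1: "1 < q" using assms by simp
    show ?thesis by (simp only: logmul[OF q1])
  qed
  also have "\<dots> = g * ln (q - 1) - g * ln (g / M) - (M - g) * ln (1 - g / M) - g * ln (q - 1)"
  proof -
    have Mg: "M * (g / M) = g" "M * (1 - g / M) = M - g" using M0 by (auto simp: field_simps)
    show ?thesis unfolding Mg ..
  qed
  also have "\<dots> = - g * ln (g / M) - (M - g) * ln (1 - g / M)" by simp
  also have "1 - g / M = (M - g) / M" using M0 by (simp add: field_simps)
  also have "- g * ln (g / M) - (M - g) * ln ((M - g) / M) = g * ln (M / g) + (M - g) * ln (M / (M - g))"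
  proof -
    have MG: "0 < M - g" using assms by simp
    have a: "ln (M / g) = ln M - ln g" using g0 M0 by (simp add: ln_div)
    have b: "ln (g / M) = ln g - ln M" using g0 M0 by (simp add: ln_div)
    have c: "ln ((M - g) / M) = ln (M - g) - ln M" using MG M0 by (simp add: ln_div)
    have d: "ln (M / (M - g)) = ln M - ln (M - g)" using MG M0 by (simp add: ln_div)
    show ?thesis unfolding a b c d by (simp add: algebra_simps)
  qed
  finally show ?thesis .
qed

lemma poly_exp:
  fixes c Lam :: real
  assumes "0 < Lam"
  shows "\<exists>N. \<forall>n\<ge>N. c * (real n + 1) ^ k \<le> exp (real n * Lam)"
proof -
  have lim0: "((\<lambda>x::real. x ^ k / exp x) \<longlongrightarrow> 0) at_top" by (rule tendsto_power_div_exp_0)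
  have fl: "filterlim (\<lambda>n::nat. real n * Lam) at_top sequentially"
    by (rule filterlim_at_top_mult_tendsto_pos[OF tendsto_const assms filterlim_real_sequentially])
  have lim: "((\<lambda>n::nat. (real n * Lam) ^ k / exp (real n * Lam)) \<longlongrightarrow> 0) sequentially"
    using filterlim_compose[OF lim0 fl] by simp
  define B where "B = \<bar>c\<bar> * (2 / Lam) ^ k + 1"
  have "0 \<le> \<bar>c\<bar> * (2 / Lam) ^ k" using assms by simp
  then have B0: "0 < B" unfolding B_def by linarith
  have "\<forall>\<^sub>F n in sequentially. (real n * Lam) ^ k / exp (real n * Lam) < 1 / B"
    using order_tendstoD(2)[OF lim] B0 by simp
  then obtain N where N: "\<And>n. n \<ge> N \<Longrightarrow> (real n * Lam) ^ k / exp (real n * Lam) < 1 / B"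
    unfolding eventually_sequentially by blast
  show ?thesis
  proof (intro exI[of _ "max N 1"] allI impI)
    fix n assume n: "max N 1 \<le> n"
    then have n1: "1 \<le> real n" by simp
    define x where "x = (real n * Lam) ^ k"
    define ee where "ee = exp (real n * Lam)"
    have ee0: "0 < ee" unfolding ee_def by simp
    have "x / ee < 1 / B" using N[of n] n unfolding x_def ee_def by simp
    then have "x / ee * (B * ee) < 1 / B * (B * ee)" using B0 ee0 by (intro mult_strict_right_mono) auto
    moreover have "x / ee * (B * ee) = B * x" using ee0 by simp
    moreover have "1 / B * (B * ee) = ee" using B0 by simp
    ultimately have "B * x < ee" by simp
    then have e: "B * (real n * Lam) ^ k \<le> exp (real n * Lam)" unfolding x_def ee_def by simp
    have "c * (real n + 1) ^ k \<le> \<bar>c\<bar> * (2 * real n) ^ k"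
    proof -
      have "(real n + 1) ^ k \<le> (2 * real n) ^ k" using n1 by (intro power_mono) auto
      then have "\<bar>c\<bar> * (real n + 1) ^ k \<le> \<bar>c\<bar> * (2 * real n) ^ k" by (intro mult_left_mono) auto
      moreover have "c * (real n + 1) ^ k \<le> \<bar>c\<bar> * (real n + 1) ^ k" by (intro mult_right_mono) auto
      ultimately show ?thesis by linarith
    qed
    also have "\<dots> = \<bar>c\<bar> * (2 / Lam) ^ k * (real n * Lam) ^ k"
    proof -
      have "(2 / Lam) * (real n * Lam) = 2 * real n" using assms by simp
      then have "(2 / Lam) ^ k * (real n * Lam) ^ k = (2 * real n) ^ k" by (metis power_mult_distrib)
      then show ?thesis by (simp add: mult.assoc)
    qed
    also have "\<dots> \<le> B * (real n * Lam) ^ k" unfolding B_def using assms by (intro mult_right_mono) auto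
    also have "\<dots> \<le> exp (real n * Lam)" by (rule e)
    finally show "c * (real n + 1) ^ k \<le> exp (real n * Lam)" .
  qed
qed

lemma final_ineq:
  fixes q Lam P eps g K0 :: real and n k t I :: nat
  assumes q: "q \<ge> 3" "Lam = ln q"
    and g: "g < q - 1" "real I \<le> g * real n"
    and tk: "t \<le> k" "k \<le> n"
    and kR: "real k \<le> (1 - P - eps) * real n + 1"
    and teps: "q + 3 \<le> (real t + 1) * eps"
    and K0: "1 \<le> K0"
    and big: "2 * (q + 1) * (K0 * q) ^ Suc t * (real n + 1) ^ Suc t \<le> exp (real n * Lam)"
  shows "2 * q ^ n * (real (n + I + 1) * q ^ (n + I) * (q ^ k * (q ^ k) ^ t * real k ^ t)
           * ((K0 * exp (real n * (P * Lam))) ^ Suc t * (q ^ n) ^ (k - t))) \<le> (q ^ n) ^ k"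
proof -
  have q0: "0 < q" using q by simp
  have L0: "0 < Lam" using q by simp
  define Ex where "Ex = n + (n + I) + k + k * t + n * (k - t)"
  define W where "W = 2 * real (n + I + 1) * real k ^ t * K0 ^ Suc t"
  have W0: "0 \<le> W" unfolding W_def using K0 by simp
  have pe: "\<And>j. q ^ j = exp (real j * Lam)" using q0 q by (simp add: pow_exp)
  have A1: "q ^ n * q ^ (n + I) * (q ^ k * (q ^ k) ^ t) * (q ^ n) ^ (k - t) = q ^ Ex"
    unfolding Ex_def by (simp add: power_add power_mult[symmetric] mult_ac)
  have A2: "(K0 * exp (real n * (P * Lam))) ^ Suc t = K0 ^ Suc t * exp (real (Suc t) * (real n * (P * Lam)))"
    by (simp only: power_mult_distrib exp_of_nat_mult)
  have "2 * q ^ n * (real (n + I + 1) * q ^ (n + I) * (q ^ k * (q ^ k) ^ t * real k ^ t)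
           * ((K0 * exp (real n * (P * Lam))) ^ Suc t * (q ^ n) ^ (k - t)))
      = W * ((q ^ n * q ^ (n + I) * (q ^ k * (q ^ k) ^ t) * (q ^ n) ^ (k - t)) * exp (real (Suc t) * (real n * (P * Lam))))"
    unfolding A2 W_def by (simp add: mult_ac)
  also have "\<dots> = W * exp (Lam * (real Ex + real (Suc t) * real n * P))"
  proof -
    have "exp (real Ex * Lam) * exp (real (Suc t) * (real n * (P * Lam))) = exp (Lam * (real Ex + real (Suc t) * real n * P))"
      by (simp add: exp_add[symmetric] algebra_simps)
    then show ?thesis unfolding A1 pe[of Ex] by simp
  qed
  also have "\<dots> \<le> W * exp (Lam * (real n * real k - real n + real t + 1))"
  proof -
    have rEx: "real Ex = 2 * real n + real I + real k + real k * real t + real n * real k - real n * real t"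
    proof -
      have d: "real (k - t) = real k - real t" using tk by (simp add: of_nat_diff)
      show ?thesis unfolding Ex_def of_nat_add of_nat_mult d by (simp add: algebra_simps)
    qed
    have I1: "real I \<le> (q - 1) * real n"
    proof -
      have "g * real n \<le> (q - 1) * real n" using g by (intro mult_right_mono) auto
      then show ?thesis using g by linarith
    qed
    have s1: "(real t + 1) * (real k + real n * P) \<le> (real t + 1) * ((1 - eps) * real n + 1)"
      using kR by (intro mult_left_mono) (auto simp: algebra_simps)
    have s2: "(q + 3) * real n \<le> (real t + 1) * eps * real n"
      using teps by (intro mult_right_mono) auto
    have "real Ex + real (Suc t) * real n * P = 2 * real n + real I - real n * real t + real n * real k + (real t + 1) * (real k + real n * P)"
      unfolding rEx by (simp add: algebra_simps)
    also have "\<dots> \<le> 2 * real n + real I - real n * real t + real n * real k + (real t + 1) * ((1 - eps) * real n + 1)"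
      using s1 by linarith
    also have "\<dots> = 3 * real n + real I + real n * real k - (real t + 1) * eps * real n + real t + 1"
      by (simp add: algebra_simps)
    also have "\<dots> \<le> real n * real k - real n + real t + 1"
      using I1 s2 by (simp add: algebra_simps)
    finally have "real Ex + real (Suc t) * real n * P \<le> real n * real k - real n + real t + 1" .
    then show ?thesis using L0 W0 by (intro mult_left_mono) auto
  qed
  also have "\<dots> = (W * q ^ Suc t * exp (- (real n * Lam))) * (q ^ n) ^ k"
    unfolding pe by (simp add: exp_add[symmetric] exp_of_nat_mult[symmetric] algebra_simps)
  also have "\<dots> \<le> 1 * (q ^ n) ^ k"
  proof -
    have Ik: "real (n + I + 1) \<le> (q + 1) * (real n + 1)"
    proof -
      have "g * real n \<le> (q - 1) * real n" using g by (intro mult_right_mono) auto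
      then have "real I \<le> (q - 1) * real n" using g by linarith
      then show ?thesis using q by (simp add: algebra_simps)
    qed
    have kt: "real k ^ t \<le> (real n + 1) ^ t" using tk by (intro power_mono) auto
    have "W * q ^ Suc t = 2 * real (n + I + 1) * real k ^ t * (K0 * q) ^ Suc t"
      unfolding W_def by (simp add: power_mult_distrib mult_ac)
    also have "\<dots> \<le> 2 * ((q + 1) * (real n + 1)) * (real n + 1) ^ t * (K0 * q) ^ Suc t"
      using Ik kt K0 q0 by (intro mult_right_mono mult_mono) auto
    also have "\<dots> = 2 * (q + 1) * (K0 * q) ^ Suc t * (real n + 1) ^ Suc t" by (simp add: algebra_simps)
    also have "\<dots> \<le> exp (real n * Lam)" by (rule big)
    finally have "W * q ^ Suc t * exp (- (real n * Lam)) \<le> exp (real n * Lam) * exp (- (real n * Lam))"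
      by (intro mult_right_mono) auto
    also have "\<dots> = 1" by (simp add: exp_minus)
    finally show ?thesis using q0 by (intro mult_right_mono) auto
  qed
  finally show ?thesis by simp
qed

lemma nat_floor_iff: "0 \<le> x \<Longrightarrow> (i \<le> nat \<lfloor>x\<rfloor>) = (real i \<le> (x::real))"
  by (simp add: le_nat_iff le_floor_iff)

lemma aux_div1: "0 < (A::real) \<Longrightarrow> 0 < B \<Longrightarrow> x / (B / 2) = 2 * A * x / (A * B)"
  by (simp add: field_simps)

lemma aux_div2: "0 < (A::real) \<Longrightarrow> 0 < B \<Longrightarrow> B / (A * B) = 1 / A"
  by (simp add: field_simps)

lemma not_ld:
  fixes g k :: real
  assumes "0 \<le> g" "0 \<le> k" "\<not> list_decodable_insdel Cd (g * real n) (k * real n) L"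
  shows "\<exists>r. L < real (card {c \<in> Cd. \<exists>i d. i \<le> nat \<lfloor>g * real n\<rfloor> \<and> d \<le> nat \<lfloor>k * real n\<rfloor> \<and> obtainable c i d r})"
proof -
  from assms(3) obtain r where
    r: "L < real (card {c \<in> Cd. \<exists>i d. real i \<le> g * real n \<and> real d \<le> k * real n \<and> obtainable c i d r})"
    unfolding list_decodable_insdel_def by (auto simp: not_le)
  have "{c \<in> Cd. \<exists>i d. real i \<le> g * real n \<and> real d \<le> k * real n \<and> obtainable c i d r}
      = {c \<in> Cd. \<exists>i d. i \<le> nat \<lfloor>g * real n\<rfloor> \<and> d \<le> nat \<lfloor>k * real n\<rfloor> \<and> obtainable c i d r}"
    using assms by (simp add: nat_floor_iff)
  then show ?thesis using r by auto
qed

theorem mainTheorem9: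
  fixes \<gamma> \<kappa> :: real
  assumes q3: "card (UNIV :: 'a::{field,finite} set) \<ge> 3"
    and gam: "0 \<le> \<gamma>" "\<gamma> < real (card (UNIV :: 'a set)) - 1"
    and kap: "0 \<le> \<kappa>" "\<kappa> < (real (card (UNIV :: 'a set)) - 1) / real (card (UNIV :: 'a set))"
  shows "\<exists>C>0. \<forall>\<epsilon>::real. 0 < \<epsilon> \<and> \<epsilon> < 1 \<longrightarrow>
           (\<exists>N. \<forall>n\<ge>N.
             (let q = real (card (UNIV :: 'a set));
                  R = 1 - (2*\<gamma> - \<kappa> + 1) * Hq q (\<gamma> / (2*\<gamma> - \<kappa> + 1))
                        + \<gamma> * log q (q - 1) - Hq q \<kappa> - \<epsilon>;
                  k = nat \<lceil>R * real n\<rceil>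
              in prob_random_linear_code n k
                   (\<lambda>Cd::'a list set. list_decodable_insdel Cd (\<gamma> * real n) (\<kappa> * real n) (exp (C / \<epsilon>)))
                 \<ge> 1 - q powr (- real n)))"
proof -
  define qn where "qn = card (UNIV :: 'a set)"
  define q where "q = real qn"
  have q3r: "q \<ge> 3" unfolding q_def qn_def using q3 by simp
  define Lam where "Lam = ln q"
  have L0: "0 < Lam" unfolding Lam_def using q3r by simp
  define M where "M = 2 * \<gamma> - \<kappa> + 1"
  define K0 where "K0 = M / (M - \<gamma>)"
  define E where "E = \<gamma> * ln (M / \<gamma>) + (M - \<gamma>) * ln (M / (M - \<gamma>)) + \<kappa> * ln ((q - 1) / \<kappa>) - (1 - \<kappa>) * ln (1 - \<kappa>)"
  define P where "P = M * Hq q (\<gamma> / M) - \<gamma> * log q (q - 1) + Hq q \<kappa>"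
  have kq: "\<kappa> < (q - 1) / q" using kap unfolding q_def qn_def by simp
  have "(q - 1) / q < 1" using q3r by simp
  then have k1: "\<kappa> < 1" using kq by linarith
  have MGp: "0 < M - \<gamma>" unfolding M_def using k1 gam by linarith
  have Mp: "0 < M" using MGp gam by linarith
  have K01: "1 \<le> K0" unfolding K0_def using MGp gam by (simp add: field_simps)
  have EP: "E = P * Lam"
  proof -
    have "(M * Hq q (\<gamma> / M) - \<gamma> * log q (q - 1)) * ln q = \<gamma> * ln (M / \<gamma>) + (M - \<gamma>) * ln (M / (M - \<gamma>))"
      using E_part1[of q \<gamma> M] q3r gam MGp by simp
    moreover have "Hq q \<kappa> * ln q = \<kappa> * ln ((q - 1) / \<kappa>) - (1 - \<kappa>) * ln (1 - \<kappa>)"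
      using E_part2[of q \<kappa>] q3r kap k1 by simp
    ultimately show ?thesis unfolding E_def P_def Lam_def by (simp add: algebra_simps)
  qed
  have E0: "0 \<le> E"
  proof -
    have t1: "0 \<le> \<gamma> * ln (M / \<gamma>)"
    proof (cases "\<gamma> = 0")
      case False
      then have "1 \<le> M / \<gamma>" using gam MGp by (simp add: field_simps)
      then show ?thesis using gam by simp
    qed simp
    have t2: "0 \<le> (M - \<gamma>) * ln (M / (M - \<gamma>))" using K01 MGp unfolding K0_def by simp
    have t3: "0 \<le> \<kappa> * ln ((q - 1) / \<kappa>)"
    proof (cases "\<kappa> = 0")
      case False
      then have "1 \<le> (q - 1) / \<kappa>" using kap k1 q3r by (simp add: field_simps)
      then show ?thesis using kap by simp
    qed simp
    have t4: "0 \<le> - (1 - \<kappa>) * ln (1 - \<kappa>)"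
    proof -
      have "ln (1 - \<kappa>) \<le> 0" using kap k1 by simp
      moreover have "0 \<le> 1 - \<kappa>" using k1 by simp
      ultimately have "(1 - \<kappa>) * ln (1 - \<kappa>) \<le> 0" by (rule mult_nonneg_nonpos[rotated])
      then show ?thesis by linarith
    qed
    show ?thesis unfolding E_def using t1 t2 t3 t4 by linarith
  qed
  have P0: "0 \<le> P" using E0 EP L0 by (simp add: zero_le_mult_iff)
  have ballb: "real (card (ball r (nat \<lfloor>\<gamma> * real n\<rfloor>) (nat \<lfloor>\<kappa> * real n\<rfloor>) n)) \<le> K0 * exp (real n * E)"
    for r :: "'a list" and n
    using ball_bound[of q, OF _ _ gam(1) kap(1) kq, of r n] q3r unfolding K0_def E_def M_def q_def qn_def by simp
  define C where "C = (q + 4) * Lam"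
  have C0: "0 < C" unfolding C_def using q3r L0 by simp
  show ?thesis
  proof (intro exI[of _ C] conjI allI impI)
    show "0 < C" by (rule C0)
  next
    fix eps :: real assume eps: "0 < eps \<and> eps < 1"
    define t where "t = nat \<lceil>(q + 3) / eps\<rceil>"
    define Lst where "Lst = exp (C / eps)"
    have t1: "(q + 3) / eps \<le> real t" unfolding t_def by linarith
    have t2: "real t \<le> (q + 3) / eps + 1"
    proof -
      have x0: "0 \<le> (q + 3) / eps" using eps q3r by simp
      then have "real t = real_of_int \<lceil>(q + 3) / eps\<rceil>" unfolding t_def by simp
      also have "\<dots> \<le> (q + 3) / eps + 1" by (rule of_int_ceiling_le_add_one)
      finally show ?thesis .
    qed
    have teps: "q + 3 \<le> (real t + 1) * eps"
    proof -
      have "q + 3 \<le> real t * eps" using t1 eps by (simp add: divide_le_eq)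
      then show ?thesis using eps by (simp add: algebra_simps)
    qed
    have tL: "real (qn ^ t) \<le> Lst"
    proof -
      have "real (qn ^ t) = exp (real t * Lam)" unfolding Lam_def q_def using q3r q_def by (simp add: pow_exp)
      also have "\<dots> \<le> exp (C / eps)"
      proof -
        have "real t \<le> (q + 4) / eps"
        proof -
          have "1 \<le> 1 / eps" using eps by simp
          then show ?thesis using t2 by (simp add: add_divide_distrib)
        qed
        then have "real t * Lam \<le> (q + 4) / eps * Lam" using L0 by (intro mult_right_mono) auto
        then show ?thesis unfolding C_def by simp
      qed
      finally show ?thesis unfolding Lst_def .
    qed
    obtain N1 where N1: "\<And>n. n \<ge> N1 \<Longrightarrow> 2 * (q + 1) * (K0 * q) ^ Suc t * (real n + 1) ^ Suc t \<le> exp (real n * Lam)"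
      using poly_exp[OF L0, of "2 * (q + 1) * (K0 * q) ^ Suc t" "Suc t"] by (auto simp: mult.assoc)
    define N where "N = max N1 (nat \<lceil>1 / eps\<rceil>)"
    show "\<exists>N. \<forall>n\<ge>N. (let q = real (card (UNIV :: 'a set));
                  R = 1 - (2*\<gamma> - \<kappa> + 1) * Hq q (\<gamma> / (2*\<gamma> - \<kappa> + 1))
                        + \<gamma> * log q (q - 1) - Hq q \<kappa> - eps;
                  k = nat \<lceil>R * real n\<rceil>
              in prob_random_linear_code n k
                   (\<lambda>Cd::'a list set. list_decodable_insdel Cd (\<gamma> * real n) (\<kappa> * real n) (exp (C / eps)))
                 \<ge> 1 - q powr (- real n))"
    proof (intro exI[of _ N] allI impI)
      fix n assume nN: "N \<le> n"
      define R where "R = 1 - P - eps"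
      define k where "k = nat \<lceil>R * real n\<rceil>"
      have Req: "1 - (2*\<gamma> - \<kappa> + 1) * Hq q (\<gamma> / (2*\<gamma> - \<kappa> + 1)) + \<gamma> * log q (q - 1) - Hq q \<kappa> - eps = R"
        unfolding R_def P_def M_def by simp
      define I where "I = nat \<lfloor>\<gamma> * real n\<rfloor>"
      define D where "D = nat \<lfloor>\<kappa> * real n\<rfloor>"
      have nge: "1 / eps \<le> real n" using nN unfolding N_def by linarith
      have kn: "k \<le> n"
      proof -
        have "R * real n \<le> (1 - eps) * real n" unfolding R_def using P0 by (intro mult_right_mono) auto
        also have "\<dots> \<le> real n" using eps by (simp add: algebra_simps)
        finally show ?thesis unfolding k_def by (simp add: nat_le_iff ceiling_le_iff)
      qed
      define V where "V = (indep_tuples n k :: 'a list list set)"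
      define LD where "LD = (\<lambda>Cd::'a list set. list_decodable_insdel Cd (\<gamma> * real n) (\<kappa> * real n) (exp (C / eps)))"
      define G where "G = {vs \<in> V. LD (span_vecs n vs)}"
      define Bad where "Bad = {vs \<in> (Tup n k :: 'a list list set). \<exists>r. Lst < real (card {c \<in> span_vecs n vs. \<exists>i d. i \<le> I \<and> d \<le> D \<and> obtainable c i d r})}"
      have cV: "real (card V) \<ge> real ((qn ^ n) ^ k) / 2"
        unfolding V_def qn_def by (rule card_indep_lower[OF q3 kn])
      have qnk0: "0 < real ((qn ^ n) ^ k)" using q3 unfolding qn_def by simp
      have Vpos: "0 < real (card V)" using cV qnk0 by linarith
      have finV: "finite V" unfolding V_def indep_tuples_eq by (rule finite_subset[OF _ finite_Tup]) auto
      have VG: "V - G \<subseteq> Bad"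
      proof
        fix vs assume vs: "vs \<in> V - G"
        then have vsT: "vs \<in> Tup n k" unfolding V_def indep_tuples_eq by auto
        have "\<not> LD (span_vecs n vs)" using vs unfolding G_def by auto
        from not_ld[OF gam(1) kap(1) this[unfolded LD_def]] show "vs \<in> Bad"
          using vsT unfolding Bad_def I_def D_def Lst_def by blast
      qed
      have finBad: "finite Bad" unfolding Bad_def by (rule finite_subset[OF _ finite_Tup]) auto
      have ub: "real (card Bad) \<le> real ((n + I + 1) * qn ^ (n + I)) * real (card (St k t :: ((nat \<Rightarrow> 'a) \<times> _) set))
           * ((K0 * exp (real n * E)) ^ Suc t * real ((qn ^ n) ^ (k - t)))"
      proof -
        have q2: "card (UNIV::'a set) \<ge> 2" using q3 by simp
        have tL': "real (card (UNIV::'a set) ^ t) \<le> Lst" using tL unfolding qn_def .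
        have Bm: "\<And>r. real (card (ball (r::'a list) I D n)) \<le> K0 * exp (real n * E)" using ballb unfolding I_def D_def .
        show ?thesis using union_bound[OF q2 tL' Bm, where k=k] unfolding Bad_def qn_def .
      qed
      have key: "2 * real (qn ^ n) * real (card Bad) \<le> real ((qn ^ n) ^ k)"
      proof (cases "k < t")
        case True
        have "real (card Bad) \<le> real ((n + I + 1) * qn ^ (n + I)) * real (card (St k t :: ((nat \<Rightarrow> 'a) \<times> _) set))
           * ((K0 * exp (real n * E)) ^ Suc t * real ((qn ^ n) ^ (k - t)))"
          by (rule ub)
        also have "St k t = {}" using St_empty[OF True] .
        finally have "card Bad = 0" by simp
        then show ?thesis using qnk0 by simp
      next
        case False
        then have tk: "t \<le> k" by simp
        have "real (card Bad) \<le> real ((n + I + 1) * qn ^ (n + I)) * real (card (St k t :: ((nat \<Rightarrow> 'a) \<times> _) set))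
           * ((K0 * exp (real n * E)) ^ Suc t * real ((qn ^ n) ^ (k - t)))"
          by (rule ub)
        also have "\<dots> \<le> real ((n + I + 1) * qn ^ (n + I)) * real (qn ^ k * (qn ^ k) ^ t * k ^ t)
           * ((K0 * exp (real n * E)) ^ Suc t * real ((qn ^ n) ^ (k - t)))"
        proof -
          have "card (St k t :: ((nat \<Rightarrow> 'a) \<times> _) set) \<le> qn ^ k * (qn ^ k) ^ t * k ^ t"
            using card_St[where 'a='a, of k t] unfolding qn_def by simp
          then have "real (card (St k t :: ((nat \<Rightarrow> 'a) \<times> _) set)) \<le> real (qn ^ k * (qn ^ k) ^ t * k ^ t)"
            by (simp only: of_nat_le_iff)
          then show ?thesis using K01 by (intro mult_right_mono mult_left_mono) auto
        qed
        finally have cB0: "real (card Bad) \<le> real ((n + I + 1) * qn ^ (n + I)) * real (qn ^ k * (qn ^ k) ^ t * k ^ t)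
           * ((K0 * exp (real n * E)) ^ Suc t * real ((qn ^ n) ^ (k - t)))" .
        have cB: "real (card Bad) \<le> real (n + I + 1) * q ^ (n + I) * (q ^ k * (q ^ k) ^ t * real k ^ t)
           * ((K0 * exp (real n * (P * Lam))) ^ Suc t * (q ^ n) ^ (k - t))"
          using cB0 by (simp only: of_nat_mult of_nat_power q_def[symmetric] EP)
        have kpos: "1 \<le> k" using tk teps eps q3r
        proof -
          have "0 < (q + 3) / eps" using eps q3r by simp
          then have "0 < t" using t1 by linarith
          then show ?thesis using tk by simp
        qed
        have kR: "real k \<le> (1 - P - eps) * real n + 1"
        proof -
          have "0 < nat \<lceil>R * real n\<rceil>" using kpos unfolding k_def by linarith
          then have "0 < \<lceil>R * real n\<rceil>" by (simp only: zero_less_nat_eq)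
          then have "real k = of_int \<lceil>R * real n\<rceil>" unfolding k_def by simp
          also have "\<dots> \<le> R * real n + 1" by (meson ceiling_correct less_eq_real_def of_int_ceiling_le_add_one)
          finally show ?thesis unfolding R_def .
        qed
        have Ig: "real I \<le> \<gamma> * real n" unfolding I_def using gam by (simp add: nat_floor_iff)
        have gq: "\<gamma> < q - 1" using gam unfolding q_def qn_def by simp
        have fi: "2 * q ^ n * (real (n + I + 1) * q ^ (n + I) * (q ^ k * (q ^ k) ^ t * real k ^ t)
           * ((K0 * exp (real n * (P * Lam))) ^ Suc t * (q ^ n) ^ (k - t))) \<le> (q ^ n) ^ k"
          by (rule final_ineq[OF q3r Lam_def gq Ig tk kn kR teps K01 N1]) (use nN in \<open>simp add: N_def\<close>)
        have A: "2 * q ^ n * real (card Bad) \<le> 2 * q ^ n * (real (n + I + 1) * q ^ (n + I) * (q ^ k * (q ^ k) ^ t * real k ^ t)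
           * ((K0 * exp (real n * (P * Lam))) ^ Suc t * (q ^ n) ^ (k - t)))"
          using cB q3r by (intro mult_left_mono) auto
        then have "2 * q ^ n * real (card Bad) \<le> (q ^ n) ^ k" using fi by linarith
        then show ?thesis unfolding q_def by simp
      qed
      have GV: "G \<subseteq> V" unfolding G_def by auto
      have cG: "real (card G) = real (card V) - real (card (V - G))"
        using card_Diff_subset[OF finite_subset[OF GV finV] GV] card_mono[OF finV GV] by (simp add: of_nat_diff)
      have cVG: "real (card (V - G)) \<le> real (card Bad)" using card_mono[OF finBad VG] by simp
      have "1 - q powr (- real n) \<le> 1 - real (card Bad) / real (card V)"
      proof -
        have qp: "q powr (- real n) = 1 / real (qn ^ n)" using q3r unfolding q_def by (simp add: powr_minus powr_realpow divide_inverse)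
        have qn0: "0 < real (qn ^ n)" using q3 unfolding qn_def by simp
        have "real (card Bad) / real (card V) \<le> real (card Bad) / (real ((qn ^ n) ^ k) / 2)"
          using cV qnk0 by (intro divide_left_mono) auto
        also have "\<dots> = 2 * real (qn ^ n) * real (card Bad) / (real (qn ^ n) * real ((qn ^ n) ^ k))"
          by (rule aux_div1[OF qn0 qnk0])
        also have "\<dots> \<le> real ((qn ^ n) ^ k) / (real (qn ^ n) * real ((qn ^ n) ^ k))"
          using key qn0 qnk0 by (intro divide_right_mono) auto
        also have "\<dots> = 1 / real (qn ^ n)" by (rule aux_div2[OF qn0 qnk0])
        finally show ?thesis unfolding qp by linarith
      qed
      also have "\<dots> \<le> real (card G) / real (card V)"
      proof -
        have "real (card V) - real (card Bad) \<le> real (card G)" using cG cVG by linarith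
        then have "(real (card V) - real (card Bad)) / real (card V) \<le> real (card G) / real (card V)"
          using Vpos by (intro divide_right_mono) auto
        moreover have "(real (card V) - real (card Bad)) / real (card V) = 1 - real (card Bad) / real (card V)"
          using Vpos by (simp add: diff_divide_distrib)
        ultimately show ?thesis by simp
      qed
      finally have main: "1 - q powr (- real n) \<le> real (card G) / real (card V)" .
      show "(let q = real (card (UNIV :: 'a set));
                  R = 1 - (2*\<gamma> - \<kappa> + 1) * Hq q (\<gamma> / (2*\<gamma> - \<kappa> + 1))
                        + \<gamma> * log q (q - 1) - Hq q \<kappa> - eps;
                  k = nat \<lceil>R * real n\<rceil>
              in prob_random_linear_code n k
                   (\<lambda>Cd::'a list set. list_decodable_insdel Cd (\<gamma> * real n) (\<kappa> * real n) (exp (C / eps)))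
                 \<ge> 1 - q powr (- real n))"
        unfolding Let_def q_def[symmetric] qn_def[symmetric] Req k_def[symmetric] prob_random_linear_code_def
        using main unfolding G_def V_def LD_def qn_def q_def by simp
    qed
  qed
qed

end
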